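(* Let $H$ be a separable complex Hilbert space and $X$ a locally compact space with positive Borel measure $\mu$. Then $$F=\operatorname{GL}^+(H)\,U(H)\,\overline{F}_0=\operatorname{GL}(H)\,\overline{F}_0=\operatorname{GL}^+(H)\,F_0,$$ and for each $f\in F$ the factorization of $f$ in $\operatorname{GL}^+(H)U(H)\overline{F}_0$ as $$f=S(f)^{1/2}\,U(T(f))\,\sigma(T(f))$$ is unique, where $T(f)=S(f)^{-1/2}f$.
   Context: A frame on $H$ is a map $f:X\to H$ such that $x\mapsto\langle\phi,f(x)\rangle$ is measurable for every $\phi\in H$ and there exist $0<A\le B$ with $A\|\phi\|^2\le\int_X|\langle\phi,f(x)\rangle|^2d\mu(x)\le B\|\phi\|^2$ for all $\phi$; it is Parseval if $A=B=1$. Its frame operator is $S(f)\phi=\int_X\langle\phi,f(x)\rangle f(x)\,d\mu(x)$. $\operatorname{GL}(H)$ is the group of bounded invertible operators with bounded inverse, $\operatorname{GL}^+(H)$ its positive elements, $U(H)$ the unitary group. $F$ is the set of frames $f$ with $\sup_x\|f(x)\|_H<\infty$, $F_0$ the Parseval ones; $(Af)(x)=A[f(x)]$, and products such as $\operatorname{GL}(H)\overline{F}_0$ denote sets $\{Af\}$. $\overline{F}_0\subset F_0$ is a fixed transversal of $F_0/U(H)$ (exactly one element from each orbit $\{Vf:V\in U(H)\}$); each $f\in F_0$ factors uniquely as $f=U(f)\sigma(f)$ with $U(f)\in U(H)$, $\sigma(f)\in\overline{F}_0$. *)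

theory Defs
  imports "HOL-Analysis.Analysis"
begin

class complex_vector = real_vector +
  fixes scaleC :: "complex \<Rightarrow> 'a \<Rightarrow> 'a"  (infixr \<open>*\<^sub>C\<close> 75)
  assumes scaleC_of_real: "scaleC (of_real r) x = scaleR r x"
    and scaleC_add_right: "scaleC a (x + y) = scaleC a x + scaleC a y"
    and scaleC_add_left: "scaleC (a + b) x = scaleC a x + scaleC b x"
    and scaleC_scaleC: "scaleC a (scaleC b x) = scaleC (a * b) x"
    and scaleC_one: "scaleC 1 x = x"

text \<open>Separability of the (metric)
  Hilbert space is expressed by the class second_countable_topology.\<close>

class chilbert_space = complex_vector + banach +
  fixes cinner :: "'a \<Rightarrow> 'a \<Rightarrow> complex"
  assumes cinner_commute: "cinner x y = cnj (cinner y x)"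
    and cinner_add_left: "cinner (x + y) z = cinner x z + cinner y z"
    and cinner_scaleC_left: "cinner (scaleC a x) y = a * cinner x y"
    and cinner_self_real: "Im (cinner x x) = 0"
    and norm_eq_sqrt_cinner: "norm x = sqrt (Re (cinner x x))"

definition bounded_clinear_op :: "('h::chilbert_space \<Rightarrow> 'h) \<Rightarrow> bool" where
  "bounded_clinear_op A \<longleftrightarrow>
     (\<forall>x y. A (x + y) = A x + A y) \<and> (\<forall>c x. A (c *\<^sub>C x) = c *\<^sub>C A x) \<and>
     (\<exists>K. \<forall>x. norm (A x) \<le> K * norm x)"

definition GL :: "('h::chilbert_space \<Rightarrow> 'h) set" where
  "GL = {A. bounded_clinear_op A \<and> bij A \<and> bounded_clinear_op (inv A)}"

definition positive_op :: "('h::chilbert_space \<Rightarrow> 'h) \<Rightarrow> bool" where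
  "positive_op A \<longleftrightarrow> bounded_clinear_op A \<and>
     (\<forall>x. Im (cinner (A x) x) = 0 \<and> Re (cinner (A x) x) \<ge> 0)"

definition GL_pos :: "('h::chilbert_space \<Rightarrow> 'h) set" where
  "GL_pos = {A \<in> GL. positive_op A}"

definition unitary_group :: "('h::chilbert_space \<Rightarrow> 'h) set" where
  "unitary_group = {U. bounded_clinear_op U \<and> surj U \<and> (\<forall>x y. cinner (U x) (U y) = cinner x y)}"

definition op_sqrt :: "('h::chilbert_space \<Rightarrow> 'h) \<Rightarrow> ('h \<Rightarrow> 'h)" where
  "op_sqrt S = (THE R. positive_op R \<and> R \<circ> R = S)"

definition op_inv_sqrt :: "('h::chilbert_space \<Rightarrow> 'h) \<Rightarrow> ('h \<Rightarrow> 'h)" where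
  "op_inv_sqrt S = inv (op_sqrt S)"

definition weakly_measurable :: "'x measure \<Rightarrow> ('x \<Rightarrow> 'h::chilbert_space) \<Rightarrow> bool" where
  "weakly_measurable \<mu> f \<longleftrightarrow> (\<forall>\<phi>. (\<lambda>x. cinner \<phi> (f x)) \<in> borel_measurable \<mu>)"

definition frame :: "'x measure \<Rightarrow> ('x \<Rightarrow> 'h::chilbert_space) \<Rightarrow> bool" where
  "frame \<mu> f \<longleftrightarrow> weakly_measurable \<mu> f \<and>
     (\<exists>A B. 0 < A \<and> A \<le> B \<and>
        (\<forall>\<phi>. ennreal (A * (norm \<phi>)\<^sup>2) \<le> (\<integral>\<^sup>+ x. ennreal ((cmod (cinner \<phi> (f x)))\<^sup>2) \<partial>\<mu>) \<and>
              (\<integral>\<^sup>+ x. ennreal ((cmod (cinner \<phi> (f x)))\<^sup>2) \<partial>\<mu>) \<le> ennreal (B * (norm \<phi>)\<^sup>2)))"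

definition parseval_frame :: "'x measure \<Rightarrow> ('x \<Rightarrow> 'h::chilbert_space) \<Rightarrow> bool" where
  "parseval_frame \<mu> f \<longleftrightarrow> weakly_measurable \<mu> f \<and>
     (\<forall>\<phi>. (\<integral>\<^sup>+ x. ennreal ((cmod (cinner \<phi> (f x)))\<^sup>2) \<partial>\<mu>) = ennreal ((norm \<phi>)\<^sup>2))"

definition bframes :: "'x measure \<Rightarrow> ('x \<Rightarrow> 'h::chilbert_space) set" where
  "bframes \<mu> = {f. frame \<mu> f \<and> (\<exists>C. \<forall>x. norm (f x) \<le> C)}"

definition bparseval_frames :: "'x measure \<Rightarrow> ('x \<Rightarrow> 'h::chilbert_space) set" where
  "bparseval_frames \<mu> = {f. parseval_frame \<mu> f \<and> (\<exists>C. \<forall>x. norm (f x) \<le> C)}"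

definition frame_op :: "'x measure \<Rightarrow> ('x \<Rightarrow> 'h::chilbert_space) \<Rightarrow> ('h \<Rightarrow> 'h)" where
  "frame_op \<mu> f = (THE S. bounded_clinear_op S \<and>
     (\<forall>\<phi> \<psi>. cinner (S \<phi>) \<psi> = (LINT x|\<mu>. cinner \<phi> (f x) * cinner (f x) \<psi>)))"

definition frame_T :: "'x measure \<Rightarrow> ('x \<Rightarrow> 'h::chilbert_space) \<Rightarrow> ('x \<Rightarrow> 'h)" where
  "frame_T \<mu> f = (\<lambda>x. op_inv_sqrt (frame_op \<mu> f) (f x))"

definition transversal :: "'x measure \<Rightarrow> ('x \<Rightarrow> 'h::chilbert_space) set \<Rightarrow> bool" where
  "transversal \<mu> Fb \<longleftrightarrow> Fb \<subseteq> bparseval_frames \<mu> \<and>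
     (\<forall>f \<in> bparseval_frames \<mu>. \<exists>!g. g \<in> Fb \<and> (\<exists>V \<in> unitary_group. f = V \<circ> g))"

definition sigma_tr :: "('x \<Rightarrow> 'h::chilbert_space) set \<Rightarrow> ('x \<Rightarrow> 'h) \<Rightarrow> ('x \<Rightarrow> 'h)" where
  "sigma_tr Fb f = (THE g. g \<in> Fb \<and> (\<exists>V \<in> unitary_group. f = V \<circ> g))"

definition U_tr :: "('x \<Rightarrow> 'h::chilbert_space) set \<Rightarrow> ('x \<Rightarrow> 'h) \<Rightarrow> ('h \<Rightarrow> 'h)" where
  "U_tr Fb f = (THE V. V \<in> unitary_group \<and> f = V \<circ> sigma_tr Fb f)"

end

theory Submission
  imports Defs "HOL-Computational_Algebra.Formal_Power_Series"
begin

lemma scaleC_zero_right [simp]: "c *\<^sub>C (0::'a::complex_vector) = 0"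
proof -
  have "c *\<^sub>C (0::'a) = c *\<^sub>C 0 + c *\<^sub>C 0" using scaleC_add_right[of c 0 0] by simp
  thus ?thesis by simp
qed

lemma scaleC_zero_left [simp]: "0 *\<^sub>C (x::'a::complex_vector) = 0"
  using scaleC_of_real[of 0 x] by simp

lemma scaleC_minus_right: "c *\<^sub>C (- (x::'a::complex_vector)) = - (c *\<^sub>C x)"
proof -
  have "c *\<^sub>C (- x) + c *\<^sub>C x = c *\<^sub>C (- x + x)" by (rule scaleC_add_right[symmetric])
  hence "c *\<^sub>C (- x) + c *\<^sub>C x = 0" by simp
  thus ?thesis by (simp add: eq_neg_iff_add_eq_0)
qed

lemma scaleC_diff_right: "c *\<^sub>C ((x::'a::complex_vector) - y) = c *\<^sub>C x - c *\<^sub>C y"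
  unfolding diff_conv_add_uminus scaleC_add_right scaleC_minus_right ..

lemma scaleC_minus_left: "(- c) *\<^sub>C (x::'a::complex_vector) = - (c *\<^sub>C x)"
proof -
  have "(- c) *\<^sub>C x + c *\<^sub>C x = (- c + c) *\<^sub>C x" by (rule scaleC_add_left[symmetric])
  hence "(- c) *\<^sub>C x + c *\<^sub>C x = 0" by simp
  thus ?thesis by (simp add: eq_neg_iff_add_eq_0)
qed

lemma scaleC_diff_left: "(c - d) *\<^sub>C (x::'a::complex_vector) = c *\<^sub>C x - d *\<^sub>C x"
  unfolding diff_conv_add_uminus scaleC_add_left scaleC_minus_left ..

lemma scaleC_real: "complex_of_real r *\<^sub>C (x::'a::complex_vector) = r *\<^sub>R x"
  by (rule scaleC_of_real)

lemma scaleC_one' [simp]: "1 *\<^sub>C (x::'a::complex_vector) = x"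
  by (rule scaleC_one)

section \<open>Sesquilinear forms and Cauchy-Schwarz\<close>

lemma quad_ineq:
  fixes a q e :: real
  assumes "\<And>t. 0 \<le> a - 2*t*q + (t*t)*q*e" "q \<ge> 0" "e \<ge> 0"
  shows "q \<le> a * e"
proof (cases "e = 0")
  case True
  show ?thesis
  proof (rule ccontr)
    assume "\<not> ?thesis"
    hence "q > 0" using True by simp
    have "0 \<le> a - 2*((a+1)/(2*q))*q" using assms(1)[of "(a+1)/(2*q)"] True by simp
    moreover have "2*((a+1)/(2*q))*q = a + 1" using \<open>q > 0\<close> by simp
    hence "a - 2*((a+1)/(2*q))*q = -1" by simp
    ultimately show False by linarith
  qed
next
  case False
  hence e: "e > 0" using assms by simp
  have "0 \<le> a - 2*(1/e)*q + ((1/e)*(1/e))*q*e" by (rule assms(1))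
  also have "((1/e)*(1/e))*q*e = q/e" using e by (simp add: power2_eq_square)
  finally have "q / e \<le> a" by simp
  thus ?thesis using e by (simp add: pos_divide_le_eq)
qed

locale sesq =
  fixes B :: "'a::complex_vector \<Rightarrow> 'a \<Rightarrow> complex"
  assumes add_left: "B (x+y) z = B x z + B y z"
    and scale_left: "B (c *\<^sub>C x) z = c * B x z"
    and herm: "B x y = cnj (B y x)"
begin

lemma add_right: "B z (x+y) = B z x + B z y"
  by (subst (1 2 3) herm) (simp add: add_left)

lemma scale_right: "B z (c *\<^sub>C x) = cnj c * B z x"
  by (subst (1 2) herm) (simp add: scale_left)

lemma zero_left [simp]: "B 0 z = 0"
  using add_left[of 0 0 z] by simp

lemma zero_right [simp]: "B z 0 = 0"
  using add_right[of z 0 0] by simp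

lemma minus_left: "B (- x) z = - B x z"
proof -
  have "B (- x) z + B x z = 0" using add_left[of "-x" x z] by simp
  thus ?thesis by (simp add: eq_neg_iff_add_eq_0)
qed

lemma minus_right: "B z (- x) = - B z x"
proof -
  have "B z (- x) + B z x = 0" using add_right[of z "-x" x] by simp
  thus ?thesis by (simp add: eq_neg_iff_add_eq_0)
qed

lemma diff_left: "B (x - y) z = B x z - B y z"
  unfolding diff_conv_add_uminus add_left minus_left ..

lemma diff_right: "B z (x - y) = B z x - B z y"
  unfolding diff_conv_add_uminus add_right minus_right ..

lemma self_real: "B x x = of_real (Re (B x x))"
proof -
  have "Im (B x x) = 0" using herm[of x x] by (simp add: complex_eq_iff)
  thus ?thesis by (simp add: complex_eq_iff)
qed

lemma CS:
  assumes pos: "\<And>x. Re (B x x) \<ge> 0"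
  shows "(cmod (B x y))^2 \<le> Re (B x x) * Re (B y y)"
proof -
  define b where "b = B x y"
  have byx: "B y x = cnj b" unfolding b_def by (rule herm)
  have key: "0 \<le> Re (B x x) - 2*t*(cmod b)^2 + (t*t)*(cmod b)^2*Re (B y y)" for t :: real
  proof -
    define m where "m = complex_of_real t * b"
    have nb1: "cnj b * b = (complex_of_real (cmod b))^2" using complex_norm_square[of b] by (simp add: mult.commute)
    have nb2: "b * cnj b = (complex_of_real (cmod b))^2" using complex_norm_square[of b] by simp
    have e1: "cnj m * b = complex_of_real t * (complex_of_real (cmod b))^2"
      unfolding m_def by (simp add: mult.assoc nb1)
    have e2: "m * cnj b = complex_of_real t * (complex_of_real (cmod b))^2"
      unfolding m_def by (simp add: mult.assoc nb2)
    have "m * cnj m = complex_of_real t * complex_of_real t * (b * cnj b)"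
      unfolding m_def by (simp add: ac_simps)
    hence e3: "m * cnj m = complex_of_real t * complex_of_real t * (complex_of_real (cmod b))^2"
      by (simp only: nb2)
    have "B (x - m *\<^sub>C y) (x - m *\<^sub>C y) = B x x - cnj m * b - m * cnj b + (m * cnj m) * B y y"
      unfolding diff_left diff_right scale_left scale_right byx b_def[symmetric] by (simp add: algebra_simps)
    then have "Re (B (x - m *\<^sub>C y) (x - m *\<^sub>C y)) = Re (B x x) - t * (cmod b)^2 - t * (cmod b)^2 + (t*t) * (cmod b)^2 * Re (B y y)"
      by (subst (asm) self_real[of y]) (simp add: e1 e2 e3)
    with pos[of "x - m *\<^sub>C y"] show ?thesis by simp
  qed
  have "Re (B y y) \<ge> 0" by (rule pos)
  from quad_ineq[OF key _ this] show ?thesis unfolding b_def by simp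
qed

end

lemma cinner_sesq: "sesq (cinner :: 'a::chilbert_space \<Rightarrow> 'a \<Rightarrow> complex)"
  by unfold_locales (auto simp: cinner_add_left cinner_scaleC_left intro: cinner_commute)

interpretation ci: sesq "cinner :: 'a::chilbert_space \<Rightarrow> 'a \<Rightarrow> complex"
  by (rule cinner_sesq)

lemma cinner_add_right: "cinner (z::'a::chilbert_space) (x+y) = cinner z x + cinner z y"
  by (rule ci.add_right)
lemma cinner_scaleC_right: "cinner (z::'a::chilbert_space) (c *\<^sub>C x) = cnj c * cinner z x"
  by (rule ci.scale_right)

lemmas cinner_simps = ci.diff_left ci.diff_right ci.minus_left ci.minus_right ci.zero_left ci.zero_right
  cinner_add_left cinner_add_right cinner_scaleC_left cinner_scaleC_right

lemma Re_cinner_self: "Re (cinner x x) = (norm (x::'a::chilbert_space))^2"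
proof -
  have "Re (cinner x x) \<ge> 0"
  proof (rule ccontr)
    assume "\<not> ?thesis"
    hence "sqrt (Re (cinner x x)) < 0" by simp
    thus False using norm_eq_sqrt_cinner[of x] norm_ge_zero[of x] by linarith
  qed
  thus ?thesis using norm_eq_sqrt_cinner[of x] by simp
qed

lemma cinner_self: "cinner x x = complex_of_real ((norm (x::'a::chilbert_space))^2)"
  using ci.self_real[of x] by (simp add: Re_cinner_self)

lemma cinner_self_nonneg: "Re (cinner (x::'a::chilbert_space) x) \<ge> 0"
  by (simp add: Re_cinner_self)

lemma Cauchy_Schwarz: "cmod (cinner x y) \<le> norm (x::'a::chilbert_space) * norm y"
proof -
  have "(cmod (cinner x y))^2 \<le> (norm x * norm y)^2"
    using ci.CS[OF cinner_self_nonneg, of x y] by (simp add: Re_cinner_self power_mult_distrib)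
  thus ?thesis by (simp add: power2_le_iff_abs_le)
qed

lemma cinner_ext: assumes "\<And>z. cinner x z = cinner (y::'a::chilbert_space) z" shows "x = y"
proof -
  have "cinner (x - y) (x - y) = 0" using assms by (simp add: ci.diff_left)
  hence "norm (x - y) = 0" by (simp add: cinner_self)
  thus ?thesis by simp
qed

lemma cinner_ext_right: assumes "\<And>z. cinner z x = cinner z (y::'a::chilbert_space)" shows "x = y"
  by (rule cinner_ext) (subst (1 2) cinner_commute, simp add: assms)

lemma norm_scaleC: "norm (c *\<^sub>C (x::'a::chilbert_space)) = cmod c * norm x"
proof -
  have "cinner (c *\<^sub>C x) (c *\<^sub>C x) = (c * cnj c) * cinner x x"
    by (simp add: cinner_simps mult.assoc)
  hence "Re (cinner (c *\<^sub>C x) (c *\<^sub>C x)) = (cmod c)^2 * Re (cinner x x)"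
    by (simp add: complex_norm_square[symmetric] del: of_real_power)
  hence "(norm (c *\<^sub>C x))^2 = (cmod c * norm x)^2"
    by (simp add: Re_cinner_self power_mult_distrib)
  thus ?thesis by (simp add: power2_eq_iff_nonneg)
qed

lemma bounded_linear_cinner_left: "bounded_linear (\<lambda>x::'a::chilbert_space. cinner x y)"
proof
  show "cinner (x + z) y = cinner x y + cinner z y" for x z by (rule cinner_add_left)
  show "cinner (r *\<^sub>R x) y = r *\<^sub>R cinner x y" for r x
    by (simp add: scaleC_real[symmetric] cinner_scaleC_left scaleR_conv_of_real)
  show "\<exists>K. \<forall>x. norm (cinner x y) \<le> norm x * K"
    using Cauchy_Schwarz[of _ y] by (intro exI[of _ "norm y"]) simp
qed

lemma bounded_linear_cinner_right: "bounded_linear (\<lambda>x::'a::chilbert_space. cinner y x)"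
proof
  show "cinner y (x + z) = cinner y x + cinner y z" for x z by (rule cinner_add_right)
  show "cinner y (r *\<^sub>R x) = r *\<^sub>R cinner y x" for r x
    by (simp add: scaleC_real[symmetric] cinner_scaleC_right scaleR_conv_of_real)
  show "\<exists>K. \<forall>x. norm (cinner y x) \<le> norm x * K"
    using Cauchy_Schwarz[of y] by (intro exI[of _ "norm y"]) (simp add: mult.commute)
qed

section \<open>Bounded complex-linear operators\<close>

abbreviation bcl :: "('h::chilbert_space \<Rightarrow> 'h) \<Rightarrow> bool" where "bcl \<equiv> bounded_clinear_op"

lemma bcl_add: "bcl A \<Longrightarrow> A (x + y) = A x + A y"
  by (simp add: bounded_clinear_op_def)
lemma bcl_scaleC: "bcl A \<Longrightarrow> A (c *\<^sub>C x) = c *\<^sub>C A x"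
  by (simp add: bounded_clinear_op_def)
lemma bcl_zero: "bcl A \<Longrightarrow> A 0 = 0"
  using bcl_add[of A 0 0] by simp
lemma bcl_minus: "bcl A \<Longrightarrow> A (- x) = - A x"
proof -
  assume a: "bcl A"
  have "A (- x) + A x = 0" using bcl_add[OF a, of "-x" x] bcl_zero[OF a] by simp
  thus ?thesis by (simp add: eq_neg_iff_add_eq_0)
qed
lemma bcl_diff: "bcl A \<Longrightarrow> A (x - y) = A x - A y"
proof -
  assume a: "bcl A"
  have "A (x + - y) = A x + - A y" by (simp only: bcl_add[OF a] bcl_minus[OF a])
  thus ?thesis by simp
qed
lemma bcl_scaleR: "bcl A \<Longrightarrow> A (r *\<^sub>R x) = r *\<^sub>R A x"
  using bcl_scaleC[of A "complex_of_real r" x] by (simp add: scaleC_real)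

lemma bcl_bound: assumes "bcl A" obtains K where "K > 0" "\<And>x. norm (A x) \<le> K * norm x"
proof -
  from assms obtain K where K: "\<And>x. norm (A x) \<le> K * norm x" by (auto simp: bounded_clinear_op_def)
  show ?thesis
  proof (rule that[of "max K 1"])
    show "\<And>x. norm (A x) \<le> max K 1 * norm x"
      using K by (meson max.cobounded1 mult_right_mono norm_ge_zero order_trans)
  qed simp
qed

lemma bcl_bounded_linear: "bcl A \<Longrightarrow> bounded_linear A"
proof -
  assume a: "bcl A"
  obtain K where "\<And>x. norm (A x) \<le> K * norm x" using bcl_bound[OF a] by blast
  thus ?thesis using a
    by (intro bounded_linear_intro[of _ K]) (auto simp: bcl_add bcl_scaleR mult.commute)
qed

lemma bclI:
  assumes "\<And>x y. A (x + y) = A x + A y" "\<And>c x. A (c *\<^sub>C x) = c *\<^sub>C A x"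
    "\<And>x. norm (A x) \<le> K * norm x"
  shows "bcl A"
  using assms unfolding bounded_clinear_op_def by blast

lemma bcl_id: "bcl (\<lambda>x. x)" "bcl id"
  by (auto intro!: bclI[where K=1])

lemma bcl_comp: assumes "bcl A" "bcl B" shows "bcl (A \<circ> B)"
proof -
  obtain K where K: "\<And>x. norm (A x) \<le> K * norm x" "K > 0" using assms(1) bcl_bound by blast
  obtain L where L: "\<And>x. norm (B x) \<le> L * norm x" "L > 0" using assms(2) bcl_bound by blast
  show ?thesis
  proof (rule bclI[where K="K*L"])
    fix x
    have "norm (A (B x)) \<le> K * norm (B x)" by (rule K)
    also have "\<dots> \<le> K * (L * norm x)" using L K by simp
    finally show "norm ((A \<circ> B) x) \<le> K * L * norm x" by (simp add: mult.assoc)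
  qed (use assms in \<open>auto simp: bcl_add bcl_scaleC\<close>)
qed

lemma bcl_comp': "bcl A \<Longrightarrow> bcl B \<Longrightarrow> bcl (\<lambda>x. A (B x))"
  using bcl_comp[of A B] by (simp add: comp_def)

lemma bcl_lincomb: assumes "bcl A" "bcl B" shows "bcl (\<lambda>x. a *\<^sub>R A x + b *\<^sub>R B x)"
proof -
  obtain K where K: "\<And>x. norm (A x) \<le> K * norm x" "K > 0" using assms(1) bcl_bound by blast
  obtain L where L: "\<And>x. norm (B x) \<le> L * norm x" "L > 0" using assms(2) bcl_bound by blast
  show ?thesis
  proof (rule bclI[where K="\<bar>a\<bar>*K + \<bar>b\<bar>*L"])
    fix x
    have "norm (a *\<^sub>R A x + b *\<^sub>R B x) \<le> \<bar>a\<bar> * norm (A x) + \<bar>b\<bar> * norm (B x)"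
      by (metis norm_scaleR norm_triangle_ineq)
    also have "\<dots> \<le> \<bar>a\<bar> * (K * norm x) + \<bar>b\<bar> * (L * norm x)"
      by (intro add_mono mult_left_mono K L) auto
    finally show "norm (a *\<^sub>R A x + b *\<^sub>R B x) \<le> (\<bar>a\<bar>*K + \<bar>b\<bar>*L) * norm x"
      by (simp add: algebra_simps)
  next
    fix x y show "a *\<^sub>R A (x + y) + b *\<^sub>R B (x + y) = a *\<^sub>R A x + b *\<^sub>R B x + (a *\<^sub>R A y + b *\<^sub>R B y)"
      using assms by (simp add: bcl_add algebra_simps)
  next
    fix c x
    have "c *\<^sub>C (a *\<^sub>R A x + b *\<^sub>R B x) = a *\<^sub>R (c *\<^sub>C A x) + b *\<^sub>R (c *\<^sub>C B x)"
      by (simp add: scaleC_add_right scaleC_real[symmetric] scaleC_scaleC mult.commute)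
    thus "a *\<^sub>R A (c *\<^sub>C x) + b *\<^sub>R B (c *\<^sub>C x) = c *\<^sub>C (a *\<^sub>R A x + b *\<^sub>R B x)"
      using assms by (simp add: bcl_scaleC)
  qed
qed

lemma bcl_continuous: "bcl A \<Longrightarrow> (X \<longlongrightarrow> x) F \<Longrightarrow> ((\<lambda>n. A (X n)) \<longlongrightarrow> A x) F"
  by (rule bounded_linear.tendsto[OF bcl_bounded_linear])

section \<open>Parallelogram law and Riesz representation\<close>

lemma norm_add_sq: "(norm (x + y))^2 = (norm x)^2 + 2 * Re (cinner x y) + (norm (y::'a::chilbert_space))^2"
proof -
  have "Re (cinner (x+y) (x+y)) = Re (cinner x x) + Re (cinner x y) + Re (cinner y x) + Re (cinner y y)"
    by (simp add: cinner_simps)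
  moreover have "Re (cinner y x) = Re (cinner x y)" by (subst cinner_commute) simp
  ultimately show ?thesis by (simp add: Re_cinner_self)
qed

lemma norm_diff_sq: "(norm (x - y))^2 = (norm x)^2 - 2 * Re (cinner x y) + (norm (y::'a::chilbert_space))^2"
  using norm_add_sq[of x "-y"] by (simp add: cinner_simps)

lemma parallelogram: "(norm (x - y))^2 + (norm (x + y))^2 = 2 * (norm x)^2 + 2 * (norm (y::'a::chilbert_space))^2"
  by (simp add: norm_add_sq norm_diff_sq)

lemma riesz:
  fixes l :: "'h::chilbert_space \<Rightarrow> complex"
  assumes ladd: "\<And>x y. l (x + y) = l x + l y" and lhom: "\<And>c x. l (c *\<^sub>C x) = c * l x"
    and lbd: "\<And>x. cmod (l x) \<le> K * norm x"
  shows "\<exists>w. \<forall>x. l x = cinner x w"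
proof (cases "\<forall>x. l x = 0")
  case True thus ?thesis by (intro exI[of _ 0]) simp
next
  case False
  then obtain u where u: "l u \<noteq> 0" by blast
  have lscaleR: "l (r *\<^sub>R x) = r * l x" for r x using lhom[of "complex_of_real r" x] by (simp add: scaleC_real)
  have l0: "l 0 = 0" using ladd[of 0 0] by simp
  have ldiff: "l (x - y) = l x - l y" for x y
  proof -
    have "l (x - y) + l y = l x" using ladd[of "x - y" y] by simp
    thus ?thesis by (simp add: algebra_simps)
  qed
  have blin: "bounded_linear l"
    by (intro bounded_linear_intro[of _ K]) (auto simp: ladd lscaleR lbd mult.commute scaleR_conv_of_real)
  define M where "M = {x. l x = 1}"
  define u1 where "u1 = (1 / l u) *\<^sub>C u"
  have "u1 \<in> M" using u unfolding M_def u1_def by (simp add: lhom)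
  hence Mne: "norm ` M \<noteq> {}" by auto
  have Mbdd: "bdd_below (norm ` M)" by (rule bdd_belowI[of _ 0]) auto
  define d where "d = Inf (norm ` M)"
  have dle: "d \<le> norm z" if "z \<in> M" for z unfolding d_def using that Mbdd by (simp add: cInf_lower)
  have d0: "d \<ge> 0" unfolding d_def by (rule cInf_greatest[OF Mne]) auto
  have "\<exists>x \<in> M. norm x < d + 1 / (Suc n)" for n
  proof -
    have "Inf (norm ` M) < d + 1 / Suc n" unfolding d_def by simp
    from cInf_lessD[OF Mne this] show ?thesis by auto
  qed
  then obtain xs where xsM: "\<And>n. xs n \<in> M" and xsn: "\<And>n. norm (xs n) < d + 1 / Suc n"
    by metis
  have mid: "(1/2) *\<^sub>R (x + y) \<in> M" if "x \<in> M" "y \<in> M" for x y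
    using that unfolding M_def by (simp add: lscaleR ladd)
  have sqbound: "(norm (xs n))^2 \<le> d^2 + (2*d+1) * (1 / Suc n)" for n
  proof -
    let ?e = "1 / real (Suc n)"
    have e0: "0 \<le> ?e" and e1: "?e \<le> 1" by (auto simp: divide_le_eq)
    have "(norm (xs n))^2 \<le> (d + ?e)^2"
      using xsn[of n] by (intro power_mono) auto
    also have "\<dots> = d^2 + 2*d*?e + ?e * ?e" by (simp add: power2_eq_square algebra_simps)
    also have "\<dots> \<le> d^2 + 2*d*?e + 1 * ?e" using e0 e1 by (intro add_left_mono mult_right_mono) auto
    finally show ?thesis by (simp add: algebra_simps)
  qed
  have distb: "(norm (xs m - xs n))^2 \<le> 2*(2*d+1) * (1 / Suc m + 1 / Suc n)" for m n
  proof -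
    have "d \<le> norm ((1/2) *\<^sub>R (xs m + xs n))" by (rule dle[OF mid[OF xsM xsM]])
    hence "2 * d \<le> norm (xs m + xs n)" by simp
    hence "(2*d)^2 \<le> (norm (xs m + xs n))^2" using d0 by (intro power_mono) auto
    moreover have "(norm (xs m - xs n))^2 = 2 * (norm (xs m))^2 + 2 * (norm (xs n))^2 - (norm (xs m + xs n))^2"
      using parallelogram[of "xs m" "xs n"] by simp
    moreover have "2*(2*d+1)*(1/Suc m + 1/Suc n) = 2*((2*d+1)*(1/Suc m)) + 2*((2*d+1)*(1/Suc n))"
      by (simp add: algebra_simps)
    moreover have "(2*d)^2 = 4*d^2" by (simp add: power2_eq_square)
    ultimately show ?thesis using sqbound[of m] sqbound[of n] by linarith
  qed
  have "Cauchy xs"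
  proof (rule CauchyI)
    fix e :: real assume e: "e > 0"
    obtain N :: nat where N: "4*(2*d+1) / (e^2) < real N" using reals_Archimedean2 by blast
    show "\<exists>N. \<forall>m\<ge>N. \<forall>n\<ge>N. norm (xs m - xs n) < e"
    proof (intro exI allI impI)
      fix m n assume mn: "N \<le> m" "N \<le> n"
      have A: "1 / real (Suc m) \<le> 1 / real (Suc N)" using mn by (simp add: frac_le)
      have B: "1 / real (Suc n) \<le> 1 / real (Suc N)" using mn by (simp add: frac_le)
      have "(norm (xs m - xs n))^2 \<le> 2*(2*d+1) * (1 / Suc m + 1 / Suc n)" by (rule distb)
      also have "\<dots> \<le> 2*(2*d+1) * (2 / Suc N)" using A B d0 by (intro mult_left_mono) auto
      also have "\<dots> < e^2"
      proof -
        have "4*(2*d+1) < e^2 * real N" using N e by (simp add: divide_less_eq mult.commute)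
        also have "\<dots> < e^2 * real (Suc N)" using e by simp
        finally show ?thesis by (simp add: field_simps)
      qed
      finally show "norm (xs m - xs n) < e" using e by (simp add: power_less_imp_less_base)
    qed
  qed
  then obtain v where v: "xs \<longlonglongrightarrow> v" using Cauchy_convergent_iff convergent_def by blast
  have "(\<lambda>n. l (xs n)) \<longlonglongrightarrow> l v" by (rule bounded_linear.tendsto[OF blin v])
  moreover have lx1: "\<And>n. l (xs n) = 1" using xsM unfolding M_def by simp
  ultimately have "(\<lambda>n. 1::complex) \<longlonglongrightarrow> l v" by simp
  hence lv: "l v = 1" by (simp add: LIMSEQ_const_iff)
  have vmin: "norm v \<le> norm z" if "z \<in> M" for z
  proof -
    have "(\<lambda>n. norm (xs n)) \<longlonglongrightarrow> norm v" by (rule tendsto_norm[OF v])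
    moreover have "(\<lambda>n. d + 1 / real (Suc n)) \<longlonglongrightarrow> d + 0"
      by (intro tendsto_add tendsto_const LIMSEQ_Suc[OF lim_inverse_n'])
    ultimately have "norm v \<le> d + 0"
      by (rule LIMSEQ_le) (use xsn less_imp_le in blast)
    thus ?thesis using dle[OF that] by simp
  qed
  have orth: "cinner v z = 0" if lz: "l z = 0" for z
  proof -
    define a where "a = cinner v z"
    define s where "s = 1 / ((norm z)^2 + 1)"
    have zp: "(norm z)^2 + 1 > 0" by (simp add: add_nonneg_pos)
    have s0: "s > 0" unfolding s_def using zp by simp
    have s1: "s * (norm z)^2 < 2" unfolding s_def using zp by (simp add: field_simps)
    define t where "t = - (complex_of_real s * a)"
    have "v + t *\<^sub>C z \<in> M" unfolding M_def using lv lz by (simp add: ladd lhom)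
    hence "(norm v)^2 \<le> (norm (v + t *\<^sub>C z))^2" using vmin by (simp add: power_mono)
    also have "\<dots> = (norm v)^2 + 2 * Re (cinner v (t *\<^sub>C z)) + (norm (t *\<^sub>C z))^2" by (rule norm_add_sq)
    also have "cinner v (t *\<^sub>C z) = - complex_of_real s * (cnj a * a)"
      unfolding t_def by (simp add: cinner_scaleC_right a_def[symmetric])
    also have "cnj a * a = complex_of_real ((cmod a)^2)" using complex_norm_square[of a] by (simp add: mult.commute)
    also have "norm (t *\<^sub>C z) = s * cmod a * norm z" unfolding t_def using s0
      by (simp add: norm_scaleC norm_mult)
    finally have "0 \<le> - 2 * s * (cmod a)^2 + (s * cmod a * norm z)^2"
      by (simp del: of_real_power add: of_real_power[symmetric])
    hence "0 \<le> s * (cmod a)^2 * (s * (norm z)^2 - 2)" by (simp add: power2_eq_square algebra_simps)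
    moreover have "s * (norm z)^2 - 2 < 0" using s1 by simp
    ultimately have "s * (cmod a)^2 = 0"
    proof -
      assume h1: "0 \<le> s * (cmod a)^2 * (s * (norm z)^2 - 2)" and h2: "s * (norm z)^2 - 2 < 0"
      show ?thesis
      proof (rule ccontr)
        assume "s * (cmod a)^2 \<noteq> 0"
        hence "s * (cmod a)^2 > 0" using s0 by simp
        from mult_pos_neg[OF this h2] h1 show False by linarith
      qed
    qed
    thus ?thesis unfolding a_def using s0 by simp
  qed
  have vnz: "v \<noteq> 0" using lv l0 by auto
  define w where "w = complex_of_real (1 / (norm v)^2) *\<^sub>C v"
  show ?thesis
  proof (intro exI allI)
    fix x
    have "l (x - l x *\<^sub>C v) = 0" by (simp add: ldiff lhom lv)
    hence "cinner v (x - l x *\<^sub>C v) = 0" by (rule orth)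
    hence "cinner v x = cnj (l x) * cinner v v" by (simp add: cinner_simps)
    hence "cinner x v = l x * cnj (cinner v v)" by (subst cinner_commute) simp
    hence "cinner x v = l x * cinner v v" by (simp add: cinner_self del: of_real_power)
    thus "l x = cinner x w" unfolding w_def using vnz
      by (simp add: cinner_scaleC_right cinner_self del: of_real_power)
  qed
qed

section \<open>Adjoints\<close>

definition adj :: "('h::chilbert_space \<Rightarrow> 'h) \<Rightarrow> 'h \<Rightarrow> 'h" where
  "adj A y = (SOME w. \<forall>x. cinner (A x) y = cinner x w)"

lemma adj_ex: assumes "bcl A" shows "\<exists>w. \<forall>x. cinner (A x) y = cinner x w"
proof -
  obtain K where K: "K > 0" "\<And>x. norm (A x) \<le> K * norm x" using assms bcl_bound by blast
  show ?thesis
  proof (rule riesz[where K="K * norm y"])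
    show "cinner (A (x + z)) y = cinner (A x) y + cinner (A z) y" for x z
      using assms by (simp add: bcl_add cinner_simps)
    show "cinner (A (c *\<^sub>C x)) y = c * cinner (A x) y" for c x
      using assms by (simp add: bcl_scaleC cinner_simps)
    show "cmod (cinner (A x) y) \<le> K * norm y * norm x" for x
    proof -
      have "cmod (cinner (A x) y) \<le> norm (A x) * norm y" by (rule Cauchy_Schwarz)
      also have "\<dots> \<le> K * norm x * norm y" using K by (intro mult_right_mono) auto
      finally show ?thesis by (simp add: algebra_simps)
    qed
  qed
qed

lemma adj_prop: "bcl A \<Longrightarrow> cinner (A x) y = cinner x (adj A y)"
  unfolding adj_def using someI_ex[OF adj_ex[of A y]] by blast

lemma adj_prop': "bcl A \<Longrightarrow> cinner y (A x) = cinner (adj A y) x"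
  by (metis adj_prop cinner_commute)

lemma bcl_adj: assumes "bcl A" shows "bcl (adj A)"
proof -
  obtain K where K: "K > 0" "\<And>x. norm (A x) \<le> K * norm x" using assms bcl_bound by blast
  show ?thesis
  proof (rule bclI[where K=K])
    fix x y show "adj A (x + y) = adj A x + adj A y"
      by (rule cinner_ext_right) (simp add: adj_prop[OF assms, symmetric] cinner_simps)
  next
    fix c x show "adj A (c *\<^sub>C x) = c *\<^sub>C adj A x"
      by (rule cinner_ext_right) (simp add: adj_prop[OF assms, symmetric] cinner_simps)
  next
    fix y
    have "(norm (adj A y))^2 = Re (cinner (adj A y) (adj A y))" by (simp add: Re_cinner_self)
    also have "\<dots> = Re (cinner (A (adj A y)) y)" by (simp add: adj_prop[OF assms])
    also have "\<dots> \<le> cmod (cinner (A (adj A y)) y)" by (rule complex_Re_le_cmod)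
    also have "\<dots> \<le> norm (A (adj A y)) * norm y" by (rule Cauchy_Schwarz)
    also have "\<dots> \<le> K * norm (adj A y) * norm y" using K by (intro mult_right_mono) auto
    finally have "norm (adj A y) * norm (adj A y) \<le> (K * norm y) * norm (adj A y)"
      by (simp add: power2_eq_square algebra_simps)
    thus "norm (adj A y) \<le> K * norm y"
      using K(1) by (cases "norm (adj A y) = 0") (auto simp: mult_le_cancel_right)
  qed
qed

section \<open>Polarization\<close>

lemma polar_zero:
  fixes D :: "'h::chilbert_space \<Rightarrow> 'h \<Rightarrow> complex"
  assumes al: "\<And>x y z. D (x + y) z = D x z + D y z"
    and sl: "\<And>c x z. D (c *\<^sub>C x) z = c * D x z"
    and ar: "\<And>x y z. D z (x + y) = D z x + D z y"
    and sr: "\<And>c x z. D z (c *\<^sub>C x) = cnj c * D z x"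
    and zero: "\<And>x. D x x = 0"
  shows "D x y = 0"
proof -
  have "D (x + y) (x + y) = D x x + D x y + (D y x + D y y)" by (simp add: al ar)
  hence 1: "D x y + D y x = 0" using zero[of "x+y"] zero[of x] zero[of y] by simp
  have "D (x + \<i> *\<^sub>C y) (x + \<i> *\<^sub>C y) = D x x + (- \<i>) * D x y + (\<i> * D y x + \<i> * (- \<i>) * D y y)"
    by (simp add: al ar sl sr algebra_simps)
  hence 2: "(- \<i>) * D x y + \<i> * D y x = 0" using zero[of "x + \<i> *\<^sub>C y"] zero[of x] zero[of y] by simp
  from 1 2 have "\<i> * D y x = \<i> * D x y" by (simp add: algebra_simps)
  hence "D y x = D x y" by simp
  with 1 show ?thesis by simp
qed

lemma bcl_quadform_zero:
  assumes "bcl T" "\<And>x. cinner (T x) x = 0" shows "T x = 0"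
proof -
  have "cinner (T x) y = 0" for y
    by (rule polar_zero[where D="\<lambda>x y. cinner (T x) y"])
       (use assms in \<open>auto simp: bcl_add bcl_scaleC cinner_simps\<close>)
  hence "cinner (T x) (T x) = 0" by blast
  thus ?thesis by (simp add: cinner_self)
qed

lemma positive_bcl: "positive_op A \<Longrightarrow> bcl A"
  by (simp add: positive_op_def)

lemma positive_selfadj: assumes "positive_op A" shows "cinner (A x) y = cinner x (A y)"
proof -
  have b: "bcl A" using assms by (rule positive_bcl)
  have "cinner (A x) y - cinner x (A y) = 0"
  proof (rule polar_zero[where D="\<lambda>x y. cinner (A x) y - cinner x (A y)"])
    fix x
    have "Im (cinner (A x) x) = 0" using assms by (simp add: positive_op_def)
    hence "cinner x (A x) = cinner (A x) x" by (subst cinner_commute) (simp add: complex_eq_iff)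
    thus "cinner (A x) x - cinner x (A x) = 0" by simp
  qed (use b in \<open>auto simp: bcl_add bcl_scaleC cinner_simps algebra_simps\<close>)
  thus ?thesis by simp
qed

lemma positive_adj: "positive_op A \<Longrightarrow> adj A = A"
  by (rule ext, rule cinner_ext_right)
     (simp add: adj_prop[OF positive_bcl, symmetric] positive_selfadj)

section \<open>GL\<close>

lemma GL_D: assumes "A \<in> GL"
  shows "bcl A" "bij A" "bcl (inv A)" "\<And>x. inv A (A x) = x" "\<And>x. A (inv A x) = x"
  using assms unfolding GL_def by (auto simp: bij_def inv_f_f surj_f_inv_f)

lemma GL_comp: assumes "A \<in> GL" "B \<in> GL" shows "A \<circ> B \<in> GL"
proof -
  have "bij (A \<circ> B)" using GL_D(2)[OF assms(1)] GL_D(2)[OF assms(2)] by (rule bij_comp[rotated])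
  moreover have "inv (A \<circ> B) = inv B \<circ> inv A"
    using GL_D(2)[OF assms(1)] GL_D(2)[OF assms(2)] by (simp add: o_inv_distrib bij_def)
  ultimately show ?thesis unfolding GL_def
    using GL_D[OF assms(1)] GL_D[OF assms(2)] by (auto intro: bcl_comp)
qed

lemma bcl_inv:
  assumes b: "bcl A" and bj: "bij A" and lb: "\<And>x. a * norm x \<le> norm (A x)" and a: "a > 0"
  shows "bcl (inv A)"
proof -
  have iA: "inv A (A x) = x" for x using bj by (simp add: bij_def inv_f_f)
  have Ai: "A (inv A x) = x" for x using bj by (simp add: bij_def surj_f_inv_f)
  show ?thesis
  proof (rule bclI[where K="1/a"])
    fix x y show "inv A (x + y) = inv A x + inv A y"
      by (metis Ai iA bcl_add[OF b])
  next
    fix c x show "inv A (c *\<^sub>C x) = c *\<^sub>C inv A x"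
      by (metis Ai iA bcl_scaleC[OF b])
  next
    fix x have "a * norm (inv A x) \<le> norm x" using lb[of "inv A x"] by (simp add: Ai)
    thus "norm (inv A x) \<le> 1 / a * norm x" using a by (simp add: field_simps)
  qed
qed

lemma pow_bound:
  assumes "bcl T" "\<And>x. norm (T x) \<le> q * norm x" "q \<ge> 0"
  shows "norm ((T ^^ n) x) \<le> q ^ n * norm x"
proof (induction n)
  case 0 thus ?case by simp
next
  case (Suc n)
  have "norm ((T ^^ Suc n) x) \<le> q * norm ((T ^^ n) x)" using assms(2) by simp
  also have "\<dots> \<le> q * (q ^ n * norm x)" using Suc assms(3) by (intro mult_left_mono) auto
  finally show ?case by (simp add: mult.assoc)
qed

lemma bcl_pow: "bcl T \<Longrightarrow> bcl (T ^^ n)"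
  by (induction n) (auto intro: bcl_comp bcl_id)

lemma coercive_GL:
  assumes b: "bcl S" and co: "\<And>x. a * (norm x)^2 \<le> Re (cinner (S x) x)" and a: "a > 0"
  shows "S \<in> GL"
proof -
  obtain K0 where K0: "K0 > 0" "\<And>x. norm (S x) \<le> K0 * norm x" using b bcl_bound by blast
  define K where "K = max K0 a"
  have K: "K > 0" "K \<ge> a" "\<And>x. norm (S x) \<le> K * norm x"
  proof -
    show "K > 0" "K \<ge> a" unfolding K_def using a by auto
    show "norm (S x) \<le> K * norm x" for x
    proof -
      have "K0 * norm x \<le> K * norm x" unfolding K_def by (intro mult_right_mono) auto
      thus ?thesis using K0(2)[of x] by linarith
    qed
  qed
  have lb: "a * norm x \<le> norm (S x)" for x
  proof -
    have "a * (norm x)^2 \<le> Re (cinner (S x) x)" by (rule co)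
    also have "\<dots> \<le> cmod (cinner (S x) x)" by (rule complex_Re_le_cmod)
    also have "\<dots> \<le> norm (S x) * norm x" by (rule Cauchy_Schwarz)
    finally have "(a * norm x) * norm x \<le> norm (S x) * norm x" by (simp add: power2_eq_square mult.assoc)
    thus ?thesis by (cases "norm x = 0") (auto simp: mult_le_cancel_right)
  qed
  have injS: "inj S"
  proof (rule injI)
    fix x y assume "S x = S y"
    hence "S (x - y) = 0" by (simp add: bcl_diff[OF b])
    hence "a * norm (x - y) \<le> 0" using lb[of "x - y"] by simp
    thus "x = y" using a by (simp add: mult_le_0_iff)
  qed
  define c where "c = K^2 / a"
  have c: "c > 0" unfolding c_def using K a by simp
  define T where "T = (\<lambda>x. 1 *\<^sub>R x + (- (1/c)) *\<^sub>R S x)"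
  have bT: "bcl T" unfolding T_def by (rule bcl_lincomb[OF bcl_id(1) b])
  have Tx: "T x = x - (1/c) *\<^sub>R S x" for x unfolding T_def by simp
  define q where "q = sqrt (1 - a^2/K^2)"
  have aK: "a^2 / K^2 \<le> 1" using K a by (simp add: power_mono)
  have q0: "q \<ge> 0" unfolding q_def using aK by simp
  have q1: "q < 1" unfolding q_def using K a by (simp add: field_simps)
  have Tb: "norm (T x) \<le> q * norm x" for x
  proof -
    have "(norm (T x))^2 = (norm x)^2 - 2 * Re (cinner x ((1/c) *\<^sub>R S x)) + (norm ((1/c) *\<^sub>R S x))^2"
      unfolding Tx by (rule norm_diff_sq)
    also have "Re (cinner x ((1/c) *\<^sub>R S x)) = (1/c) * Re (cinner (S x) x)"
      by (subst cinner_commute) (simp add: scaleC_real[symmetric] cinner_scaleC_left)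
    also have "(norm ((1/c) *\<^sub>R S x))^2 = (1/c)^2 * (norm (S x))^2"
      using c by (simp add: power_divide)
    finally have eq: "(norm (T x))^2 = (norm x)^2 - 2 * ((1/c) * Re (cinner (S x) x)) + (1/c)^2 * (norm (S x))^2" .
    have "(1/c) * (a * (norm x)^2) \<le> (1/c) * Re (cinner (S x) x)" using co c by (intro mult_left_mono) auto
    moreover have "(1/c)^2 * (norm (S x))^2 \<le> (1/c)^2 * (K * norm x)^2"
      using K(3)[of x] by (intro mult_left_mono power_mono) auto
    ultimately have "(norm (T x))^2 \<le> (norm x)^2 - 2 * ((1/c) * (a * (norm x)^2)) + (1/c)^2 * (K * norm x)^2"
      using eq by linarith
    also have "\<dots> = (1 - a^2/K^2) * (norm x)^2"
      unfolding c_def using K a by (simp add: field_simps power2_eq_square)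
    also have "\<dots> = (q * norm x)^2" unfolding q_def using aK by (simp add: power_mult_distrib)
    finally show ?thesis using q0 by (simp add: power2_le_iff_abs_le)
  qed
  have pb: "norm ((T ^^ n) y) \<le> q ^ n * norm y" for n y by (rule pow_bound[OF bT Tb q0])
  have summ: "summable (\<lambda>n. (T ^^ n) y)" for y
  proof (rule summable_comparison_test')
    show "summable (\<lambda>n. norm y * q ^ n)" using q0 q1 by (intro summable_mult summable_geometric) simp
    show "norm ((T ^^ n) y) \<le> norm y * q ^ n" for n using pb[of n y] by (simp add: mult.commute)
  qed
  have surjS: "surj S"
  proof -
    have "y \<in> range S" for y
    proof -
      define s where "s = (\<Sum>n. (T ^^ n) y)"
      have "T s = (\<Sum>n. T ((T ^^ n) y))" unfolding s_def
        by (rule bounded_linear.suminf[OF bcl_bounded_linear[OF bT] summ])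
      also have "\<dots> = (\<Sum>n. (T ^^ Suc n) y)" by simp
      also have "\<dots> = s - y" unfolding s_def using suminf_split_head[OF summ[of y]] by simp
      finally have Ts: "T s = s - y" .
      have "S ((1/c) *\<^sub>R s) = y"
      proof -
        have "T s = s - (1/c) *\<^sub>R S s" by (rule Tx)
        hence "(1/c) *\<^sub>R S s = y" using Ts by simp
        thus ?thesis by (simp add: bcl_scaleR[OF b])
      qed
      thus ?thesis by (metis rangeI)
    qed
    thus ?thesis by blast
  qed
  have bj: "bij S" using injS surjS by (simp add: bij_def)
  show ?thesis unfolding GL_def using b bj bcl_inv[OF b bj lb a] by simp
qed

lemma unitary_D: assumes "V \<in> unitary_group"
  shows "bcl V" "surj V" "\<And>x y. cinner (V x) (V y) = cinner x y" "\<And>x. norm (V x) = norm x"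
proof -
  show "bcl V" "surj V" "\<And>x y. cinner (V x) (V y) = cinner x y" using assms by (auto simp: unitary_group_def)
  fix x have "Re (cinner (V x) (V x)) = Re (cinner x x)" using assms by (simp add: unitary_group_def)
  thus "norm (V x) = norm x" by (simp add: Re_cinner_self)
qed

lemma unitary_GL: assumes "V \<in> unitary_group" shows "V \<in> GL"
proof -
  note u = unitary_D[OF assms]
  have "inj V"
  proof (rule injI)
    fix x y assume "V x = V y"
    hence "norm (V (x - y)) = 0" by (simp add: bcl_diff[OF u(1)])
    thus "x = y" using u(4) by simp
  qed
  hence bj: "bij V" using u(2) by (simp add: bij_def)
  have "bcl (inv V)" by (rule bcl_inv[OF u(1) bj, of 1]) (simp_all add: u(4))
  thus ?thesis unfolding GL_def using u(1) bj by simp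
qed

lemma unitary_inv_cinner: assumes "V \<in> unitary_group" shows "cinner y (V z) = cinner (inv V y) z"
proof -
  have "cinner y (V z) = cinner (V (inv V y)) (V z)" using GL_D(5)[OF unitary_GL[OF assms]] by simp
  also have "\<dots> = cinner (inv V y) z" by (rule unitary_D(3)[OF assms])
  finally show ?thesis .
qed

lemma bilinear_Cauchy_product_sums:
  fixes a :: "nat \<Rightarrow> 'a::banach" and b :: "nat \<Rightarrow> 'b::banach"
    and prod :: "'a \<Rightarrow> 'b \<Rightarrow> 'c::real_normed_vector"
  assumes bb: "bounded_bilinear prod"
    and a: "summable (\<lambda>k. norm (a k))"
    and b: "summable (\<lambda>k. norm (b k))"
  shows "(\<lambda>k. \<Sum>i\<le>k. prod (a i) (b (k - i))) sums prod (\<Sum>k. a k) (\<Sum>k. b k)"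
proof -
  let ?S1 = "\<lambda>n::nat. {..<n} \<times> {..<n}"
  let ?S2 = "\<lambda>n::nat. {(i,j). i + j < n}"
  have S1_mono: "\<And>m n. m \<le> n \<Longrightarrow> ?S1 m \<subseteq> ?S1 n" by auto
  have S2_le_S1: "\<And>n. ?S2 n \<subseteq> ?S1 n" by auto
  have S1_le_S2: "\<And>n. ?S1 (n div 2) \<subseteq> ?S2 n" by auto
  have finite_S1: "\<And>n. finite (?S1 n)" by simp
  with S2_le_S1 have finite_S2: "\<And>n. finite (?S2 n)" by (rule finite_subset)
  let ?g = "\<lambda>(i,j). prod (a i) (b j)"
  let ?f = "\<lambda>(i,j). norm (a i) * norm (b j)"
  have f_nonneg: "\<And>x. 0 \<le> ?f x" by auto
  then have norm_sum_f: "\<And>A. norm (sum ?f A) = sum ?f A"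
    unfolding real_norm_def
    by (simp only: abs_of_nonneg sum_nonneg [rule_format])
  have "(\<lambda>n. prod (\<Sum>k<n. a k) (\<Sum>k<n. b k)) \<longlonglongrightarrow> prod (\<Sum>k. a k) (\<Sum>k. b k)"
    by (intro bounded_bilinear.tendsto[OF bb] summable_LIMSEQ summable_norm_cancel [OF a] summable_norm_cancel [OF b])
  moreover have "prod (\<Sum>k<n. a k) (\<Sum>k<n. b k) = sum ?g (?S1 n)" for n
    by (subst bounded_bilinear.sum_left[OF bb], simp only: bounded_bilinear.sum_right[OF bb] sum.cartesian_product)
  ultimately have 1: "(\<lambda>n. sum ?g (?S1 n)) \<longlonglongrightarrow> prod (\<Sum>k. a k) (\<Sum>k. b k)" by simp
  have "(\<lambda>n. (\<Sum>k<n. norm (a k)) * (\<Sum>k<n. norm (b k))) \<longlonglongrightarrow> (\<Sum>k. norm (a k)) * (\<Sum>k. norm (b k))"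
    using a b by (intro tendsto_mult summable_LIMSEQ)
  then have "(\<lambda>n. sum ?f (?S1 n)) \<longlonglongrightarrow> (\<Sum>k. norm (a k)) * (\<Sum>k. norm (b k))"
    by (simp only: sum_product sum.Sigma [rule_format] finite_lessThan)
  then have "convergent (\<lambda>n. sum ?f (?S1 n))"
    by (rule convergentI)
  then have Cauchy: "Cauchy (\<lambda>n. sum ?f (?S1 n))"
    by (rule convergent_Cauchy)
  have Z: "Zfun (\<lambda>n. sum ?f (?S1 n - ?S2 n)) sequentially"
  proof (rule ZfunI, simp only: eventually_sequentially norm_sum_f)
    fix r :: real
    assume r: "0 < r"
    from CauchyD [OF Cauchy r] obtain N
      where "\<forall>m\<ge>N. \<forall>n\<ge>N. norm (sum ?f (?S1 m) - sum ?f (?S1 n)) < r" ..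
    then have "\<And>m n. N \<le> n \<Longrightarrow> n \<le> m \<Longrightarrow> norm (sum ?f (?S1 m - ?S1 n)) < r"
      by (simp only: sum_diff finite_S1 S1_mono)
    then have N: "\<And>m n. N \<le> n \<Longrightarrow> n \<le> m \<Longrightarrow> sum ?f (?S1 m - ?S1 n) < r"
      by (simp only: norm_sum_f)
    show "\<exists>N. \<forall>n\<ge>N. sum ?f (?S1 n - ?S2 n) < r"
    proof (intro exI allI impI)
      fix n
      assume "2 * N \<le> n"
      then have n: "N \<le> n div 2" by simp
      have "sum ?f (?S1 n - ?S2 n) \<le> sum ?f (?S1 n - ?S1 (n div 2))"
        by (intro sum_mono2 finite_Diff finite_S1 f_nonneg Diff_mono subset_refl S1_le_S2)
      also have "\<dots> < r"
        using n div_le_dividend by (rule N)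
      finally show "sum ?f (?S1 n - ?S2 n) < r" .
    qed
  qed
  obtain K where K: "\<And>x y. norm (prod x y) \<le> norm x * norm y * K"
    using bounded_bilinear.pos_bounded[OF bb] by blast
  have bnd: "norm (sum ?g (?S1 n - ?S2 n)) \<le> norm (sum ?f (?S1 n - ?S2 n)) * K" for n
  proof -
    have "norm (sum ?g (?S1 n - ?S2 n)) \<le> (\<Sum>x\<in>?S1 n - ?S2 n. norm (?g x))" by (rule norm_sum)
    also have "\<dots> \<le> (\<Sum>x\<in>?S1 n - ?S2 n. ?f x * K)" by (intro sum_mono) (auto simp: K)
    also have "\<dots> = sum ?f (?S1 n - ?S2 n) * K" by (simp add: sum_distrib_right)
    also have "\<dots> = norm (sum ?f (?S1 n - ?S2 n)) * K" by (simp only: norm_sum_f)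
    finally show ?thesis .
  qed
  have "Zfun (\<lambda>n. sum ?g (?S1 n - ?S2 n)) sequentially"
    by (rule Zfun_imp_Zfun[OF Z always_eventually[OF allI[OF bnd]]])
  then have 2: "(\<lambda>n. sum ?g (?S1 n) - sum ?g (?S2 n)) \<longlonglongrightarrow> 0"
    unfolding tendsto_Zfun_iff diff_0_right
    by (simp only: sum_diff finite_S1 S2_le_S1)
  with 1 have "(\<lambda>n. sum ?g (?S2 n)) \<longlonglongrightarrow> prod (\<Sum>k. a k) (\<Sum>k. b k)"
    by (rule Lim_transform2)
  then show ?thesis
    by (simp only: sums_def sum.triangle_reindex)
qed

section \<open>Coefficients of the square root series\<close>

definition cf :: "nat \<Rightarrow> real" where "cf n = (-1)^n * ((1/2) gchoose n)"

lemma gchoose_step: "(a::real) gchoose (Suc k) = (a - of_nat k) / of_nat (Suc k) * (a gchoose k)"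
proof -
  have "of_nat (Suc k) * (a gchoose Suc k) = (a - of_nat k) * (a gchoose k)"
    using gbinomial_absorption[of k a] gbinomial_absorb_comp[of a k] by simp
  thus ?thesis by (simp add: field_simps del: of_nat_Suc)
qed

lemma cf0 [simp]: "cf 0 = 1" by (simp add: cf_def)

lemma cf_Suc: "cf (Suc k) = cf k * ((of_nat k - 1/2) / of_nat (Suc k))"
  unfolding cf_def gchoose_step by (simp add: field_simps del: of_nat_Suc)

lemma cf_nonpos: "n \<ge> 1 \<Longrightarrow> cf n \<le> 0"
proof (induction n rule: dec_induct)
  case base thus ?case by (simp add: cf_def)
next
  case (step n)
  have "(of_nat n - 1/2) / of_nat (Suc n) \<ge> (0::real)" using step(1) by simp
  from mult_nonpos_nonneg[OF step(3) this] show ?case unfolding cf_Suc .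
qed

lemma cf_sums: "\<bar>q\<bar> < 1 \<Longrightarrow> (\<lambda>n. cf n * q^n) sums sqrt (1 - q)"
  using sqrt_series[of "-q"] by (simp add: cf_def power_minus' mult_ac)

lemma cf_abs_summable: assumes "0 \<le> q" "q < 1" shows "summable (\<lambda>n. \<bar>cf n\<bar> * q^n)"
proof (rule summable_comparison_test'[where N=1])
  show "summable (\<lambda>n. - (cf n * q^n))" using cf_sums[of q] assms by (intro summable_minus) (auto simp: sums_iff)
  show "norm (\<bar>cf n\<bar> * q^n) \<le> - (cf n * q^n)" if "1 \<le> n" for n
    using cf_nonpos[OF that] assms by (simp add: abs_mult)
qed

definition ecf :: "nat \<Rightarrow> real" where "ecf k = (if k = 0 then 1 else if k = 1 then -1 else 0)"

lemma cf_conv: "(\<Sum>i\<le>k. cf i * cf (k - i)) = ecf k"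
proof -
  have "(\<Sum>i\<le>k. cf i * cf (k - i)) = (\<Sum>i\<le>k. (-1)^k * (((1/2) gchoose i) * ((1/2) gchoose (k - i))))"
  proof (rule sum.cong)
    fix i assume "i \<in> {..k}"
    hence e: "(-1::real)^i * (-1)^(k-i) = (-1)^k" by (simp add: power_add[symmetric])
    have "cf i * cf (k - i) = ((-1::real)^i * (-1)^(k-i)) * (((1/2) gchoose i) * ((1/2) gchoose (k - i)))"
      unfolding cf_def by (simp only: ac_simps)
    thus "cf i * cf (k - i) = (-1)^k * (((1/2) gchoose i) * ((1/2) gchoose (k - i)))"
      by (simp only: e)
  qed auto
  also have "\<dots> = (-1)^k * ((1/2 + 1/2 :: real) gchoose k)"
    by (simp only: sum_distrib_left[symmetric] atLeast0AtMost[symmetric] gbinomial_Vandermonde)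
  also have "(1/2 + 1/2 :: real) = of_nat 1" by simp
  also have "(of_nat 1 :: real) gchoose k = of_nat (1 choose k)" by (simp only: binomial_gbinomial)
  also have "(-1)^k * real (1 choose k) = ecf k"
    by (cases k; cases "k - 1") (auto simp: ecf_def)
  finally show ?thesis .
qed

primrec bpow :: "('a::real_normed_vector \<Rightarrow>\<^sub>L 'a) \<Rightarrow> nat \<Rightarrow> 'a \<Rightarrow>\<^sub>L 'a" where
  "bpow B 0 = id_blinfun"
| "bpow B (Suc n) = B o\<^sub>L bpow B n"

lemma bpow_apply: "blinfun_apply (bpow B n) = (blinfun_apply B ^^ n)"
  by (induction n) auto

lemma bpow_add: "bpow B i o\<^sub>L bpow B j = bpow B (i + j)"
  by (rule blinfun_eqI) (simp add: bpow_apply funpow_add)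

lemma bounded_linear_scaleC: "bounded_linear (\<lambda>v::'h::chilbert_space. c *\<^sub>C v)"
proof (rule bounded_linear_intro[where K="cmod c"])
  show "c *\<^sub>C (x + y) = c *\<^sub>C x + c *\<^sub>C y" for x y :: 'h by (rule scaleC_add_right)
  show "c *\<^sub>C (r *\<^sub>R x) = r *\<^sub>R (c *\<^sub>C x)" for r and x :: 'h
    by (simp add: scaleC_real[symmetric] scaleC_scaleC mult.commute)
  show "norm (c *\<^sub>C x) \<le> norm x * cmod c" for x :: 'h by (simp add: norm_scaleC mult.commute)
qed

lemma contraction_decomp:
  fixes S :: "'h::chilbert_space \<Rightarrow> 'h"
  assumes b: "bcl S" and co: "\<And>x. a * (norm x)^2 \<le> Re (cinner (S x) x)" and a: "a > 0"
  obtains c q where "c > 0" "q \<ge> 0" "q < 1" "\<And>x. norm (x - (1/c) *\<^sub>R S x) \<le> q * norm x"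
proof -
  obtain K0 where K0: "K0 > 0" "\<And>x. norm (S x) \<le> K0 * norm x" using b bcl_bound by blast
  define K where "K = max K0 a"
  have K: "K > 0" "K \<ge> a" "\<And>x. norm (S x) \<le> K * norm x"
  proof -
    show "K > 0" "K \<ge> a" unfolding K_def using a by auto
    show "norm (S x) \<le> K * norm x" for x
    proof -
      have "K0 * norm x \<le> K * norm x" unfolding K_def by (intro mult_right_mono) auto
      thus ?thesis using K0(2)[of x] by linarith
    qed
  qed
  define c where "c = K^2 / a"
  have c: "c > 0" unfolding c_def using K a by simp
  define q where "q = sqrt (1 - a^2/K^2)"
  have aK: "a^2 / K^2 \<le> 1" using K a by (simp add: power_mono)
  have q0: "q \<ge> 0" unfolding q_def using aK by simp
  have q1: "q < 1" unfolding q_def using K a by (simp add: field_simps)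
  have Tb: "norm (x - (1/c) *\<^sub>R S x) \<le> q * norm x" for x
  proof -
    have "(norm (x - (1/c) *\<^sub>R S x))^2 = (norm x)^2 - 2 * Re (cinner x ((1/c) *\<^sub>R S x)) + (norm ((1/c) *\<^sub>R S x))^2"
      by (rule norm_diff_sq)
    also have "Re (cinner x ((1/c) *\<^sub>R S x)) = (1/c) * Re (cinner (S x) x)"
      by (subst cinner_commute) (simp add: scaleC_real[symmetric] cinner_scaleC_left)
    also have "(norm ((1/c) *\<^sub>R S x))^2 = (1/c)^2 * (norm (S x))^2"
      using c by (simp add: power_divide)
    finally have eq: "(norm (x - (1/c) *\<^sub>R S x))^2 = (norm x)^2 - 2 * ((1/c) * Re (cinner (S x) x)) + (1/c)^2 * (norm (S x))^2" .
    have "(1/c) * (a * (norm x)^2) \<le> (1/c) * Re (cinner (S x) x)" using co c by (intro mult_left_mono) auto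
    moreover have "(1/c)^2 * (norm (S x))^2 \<le> (1/c)^2 * (K * norm x)^2"
      using K(3)[of x] by (intro mult_left_mono power_mono) auto
    ultimately have "(norm (x - (1/c) *\<^sub>R S x))^2 \<le> (norm x)^2 - 2 * ((1/c) * (a * (norm x)^2)) + (1/c)^2 * (K * norm x)^2"
      using eq by linarith
    also have "\<dots> = (1 - a^2/K^2) * (norm x)^2"
      unfolding c_def using K a by (simp add: field_simps power2_eq_square)
    also have "\<dots> = (q * norm x)^2" unfolding q_def using aK by (simp add: power_mult_distrib)
    finally show ?thesis using q0 by (simp add: power2_le_iff_abs_le)
  qed
  show ?thesis by (rule that[OF c q0 q1 Tb])
qed

lemma scaleR_scaleC_commute: "r *\<^sub>R (c *\<^sub>C (v::'h::complex_vector)) = c *\<^sub>C (r *\<^sub>R v)"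
  by (simp add: scaleC_real[symmetric] scaleC_scaleC mult.commute)

lemma sqrt_exists:
  fixes S :: "'h::chilbert_space \<Rightarrow> 'h"
  assumes pS: "positive_op S" and co: "\<And>x. a * (norm x)^2 \<le> Re (cinner (S x) x)" and a: "a > 0"
  shows "\<exists>R \<delta>. positive_op R \<and> (\<forall>x. R (R x) = S x) \<and> \<delta> > 0 \<and> (\<forall>x. \<delta> * (norm x)^2 \<le> Re (cinner (R x) x))
           \<and> (\<forall>A. bcl A \<longrightarrow> (\<forall>x. A (S x) = S (A x)) \<longrightarrow> (\<forall>x. A (R x) = R (A x)))"
proof -
  have b: "bcl S" using pS by (rule positive_bcl)
  obtain c q where c: "c > 0" and q0: "q \<ge> 0" and q1: "q < 1"
    and Tq: "\<And>x. norm (x - (1/c) *\<^sub>R S x) \<le> q * norm x"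
    using contraction_decomp[OF b co a] by blast
  define T where "T = (\<lambda>x. 1 *\<^sub>R x + (- (1/c)) *\<^sub>R S x)"
  have bT: "bcl T" unfolding T_def by (rule bcl_lincomb[OF bcl_id(1) b])
  have Tx: "T x = x - (1/c) *\<^sub>R S x" for x unfolding T_def by simp
  have Tn: "norm (T x) \<le> q * norm x" for x using Tq[of x] by (simp add: Tx)
  have Tsa: "cinner (T x) y = cinner x (T y)" for x y
    unfolding Tx by (simp add: cinner_simps scaleC_real[symmetric] positive_selfadj[OF pS])
  have Tnsa: "cinner ((T^^n) x) y = cinner x ((T^^n) y)" for n x y
  proof (induction n arbitrary: y)
    case 0 thus ?case by simp
  next
    case (Suc n)
    have "cinner ((T^^Suc n) x) y = cinner ((T^^n) x) (T y)" by (simp add: Tsa)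
    also have "\<dots> = cinner x ((T^^n) (T y))" by (rule Suc)
    also have "(T^^n) (T y) = (T^^Suc n) y" by (simp add: funpow_swap1)
    finally show ?case .
  qed
  have blT: "bounded_linear T" by (rule bcl_bounded_linear[OF bT])
  define Tb where "Tb = Blinfun T"
  have Tb_apply: "blinfun_apply Tb = T" unfolding Tb_def by (rule bounded_linear_Blinfun_apply[OF blT])
  have pw_apply: "blinfun_apply (bpow Tb n) x = (T^^n) x" for n x by (simp add: bpow_apply Tb_apply)
  have pw_norm: "norm (bpow Tb n) \<le> q^n" for n
    by (rule norm_blinfun_bound) (auto simp: pw_apply q0 intro: pow_bound[OF bT Tn q0])
  define u where "u n = cf n *\<^sub>R bpow Tb n" for n
  have u_norm: "norm (norm (u n)) \<le> \<bar>cf n\<bar> * q^n" for n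
    unfolding u_def using pw_norm[of n] by (simp add: mult_left_mono)
  have su: "summable (\<lambda>n. norm (u n))"
    by (rule summable_comparison_test'[OF cf_abs_summable[OF q0 q1], where N=0]) (use u_norm in simp)
  have su': "summable u" by (rule summable_norm_cancel[OF su])
  define Rb where "Rb = suminf u"
  have Rb_apply: "blinfun_apply Rb x = (\<Sum>n. cf n *\<^sub>R (T^^n) x)" for x
  proof -
    have "blinfun_apply Rb x = (\<Sum>n. blinfun_apply (u n) x)" unfolding Rb_def
      by (rule bounded_linear.suminf[OF blinfun.bounded_linear_left su'])
    thus ?thesis by (simp add: u_def pw_apply blinfun.scaleR_left)
  qed
  have sv: "summable (\<lambda>n. cf n *\<^sub>R (T^^n) x)" for x
    using bounded_linear.summable[OF blinfun.bounded_linear_left su', of x]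
    by (simp add: u_def pw_apply blinfun.scaleR_left)
  have bbc: "bounded_bilinear ((o\<^sub>L) :: 'h \<Rightarrow>\<^sub>L 'h \<Rightarrow> _)" by (rule bounded_bilinear_blinfun_compose)
  have sq: "Rb o\<^sub>L Rb = id_blinfun - Tb"
  proof -
    have "(\<lambda>k. \<Sum>i\<le>k. u i o\<^sub>L u (k - i)) sums (Rb o\<^sub>L Rb)"
      unfolding Rb_def by (rule bilinear_Cauchy_product_sums[OF bbc su su])
    moreover have "(\<Sum>i\<le>k. u i o\<^sub>L u (k - i)) = ecf k *\<^sub>R bpow Tb k" for k
    proof -
      have "(\<Sum>i\<le>k. u i o\<^sub>L u (k - i)) = (\<Sum>i\<le>k. (cf i * cf (k-i)) *\<^sub>R bpow Tb k)"
        by (rule sum.cong) (auto simp: u_def bounded_bilinear.scaleR_left[OF bbc]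
            bounded_bilinear.scaleR_right[OF bbc] bpow_add)
      also have "\<dots> = (\<Sum>i\<le>k. cf i * cf (k-i)) *\<^sub>R bpow Tb k" by (simp add: scaleR_sum_left)
      finally show ?thesis by (simp add: cf_conv)
    qed
    ultimately have "(\<lambda>k. ecf k *\<^sub>R bpow Tb k) sums (Rb o\<^sub>L Rb)" by simp
    moreover have "(\<lambda>k. ecf k *\<^sub>R bpow Tb k) sums (\<Sum>k\<in>{0,1}. ecf k *\<^sub>R bpow Tb k)"
      by (rule sums_finite) (auto simp: ecf_def)
    ultimately have "Rb o\<^sub>L Rb = (\<Sum>k\<in>{0,1}. ecf k *\<^sub>R bpow Tb k)" using sums_unique2 by blast
    also have "\<dots> = id_blinfun - Tb" by (auto simp: ecf_def intro!: blinfun_eqI simp: blinfun.bilinear_simps)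
    finally show ?thesis .
  qed
  have RRb: "blinfun_apply Rb (blinfun_apply Rb x) = x - T x" for x
    using arg_cong[OF sq, of "\<lambda>B. blinfun_apply B x"] by (simp add: Tb_apply blinfun.diff_left)
  define R where "R x = sqrt c *\<^sub>R blinfun_apply Rb x" for x
  have RR: "R (R x) = S x" for x
  proof -
    have "R (R x) = (sqrt c * sqrt c) *\<^sub>R blinfun_apply Rb (blinfun_apply Rb x)"
      by (simp add: R_def blinfun.scaleR_right)
    also have "\<dots> = c *\<^sub>R ((1/c) *\<^sub>R S x)" using c by (simp add: RRb Tx)
    also have "\<dots> = S x" using c by simp
    finally show ?thesis .
  qed
  have Rb_scaleC: "blinfun_apply Rb (z *\<^sub>C x) = z *\<^sub>C blinfun_apply Rb x" for z x
  proof -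
    have "blinfun_apply Rb (z *\<^sub>C x) = (\<Sum>n. z *\<^sub>C (cf n *\<^sub>R (T^^n) x))"
      unfolding Rb_apply by (simp add: bcl_scaleC[OF bcl_pow[OF bT]] scaleR_scaleC_commute)
    also have "\<dots> = z *\<^sub>C (\<Sum>n. cf n *\<^sub>R (T^^n) x)"
      by (rule bounded_linear.suminf[OF bounded_linear_scaleC sv, symmetric])
    finally show ?thesis by (simp add: Rb_apply)
  qed
  have bR: "bcl R"
  proof (rule bclI[where K="sqrt c * norm Rb"])
    show "R (x + y) = R x + R y" for x y by (simp add: R_def blinfun.add_right scaleR_add_right)
    show "R (z *\<^sub>C x) = z *\<^sub>C R x" for z x by (simp add: R_def Rb_scaleC scaleR_scaleC_commute)
    show "norm (R x) \<le> sqrt c * norm Rb * norm x" for x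
      using norm_blinfun[of Rb x] c by (simp add: R_def mult.assoc mult_left_mono)
  qed
  have sc: "summable (\<lambda>n. cinner (cf n *\<^sub>R (T^^n) x) x)" for x
    by (rule bounded_linear.summable[OF bounded_linear_cinner_left sv])
  have qf: "cinner (blinfun_apply Rb x) x = (\<Sum>n. cinner (cf n *\<^sub>R (T^^n) x) x)" for x
    unfolding Rb_apply by (rule bounded_linear.suminf[OF bounded_linear_cinner_left sv])
  have term_eq: "cinner (cf n *\<^sub>R (T^^n) x) x = complex_of_real (cf n) * cinner ((T^^n) x) x" for n x
    by (simp add: scaleC_real[symmetric] cinner_scaleC_left)
  have realterm: "Im (cinner ((T^^n) x) x) = 0" for n x
  proof -
    have "cinner ((T^^n) x) x = cnj (cinner ((T^^n) x) x)"
      by (subst (2) cinner_commute) (simp add: Tnsa)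
    thus ?thesis by (simp add: complex_eq_iff)
  qed
  have ImR: "Im (cinner (blinfun_apply Rb x) x) = 0" for x
    unfolding qf Im_suminf[OF sc] by (simp add: term_eq realterm)
  have ReR: "sqrt (1 - q) * (norm x)^2 \<le> Re (cinner (blinfun_apply Rb x) x)" for x
  proof -
    have s1: "(\<lambda>n. cf n * q^n * (norm x)^2) sums (sqrt (1 - q) * (norm x)^2)"
      by (rule sums_mult2[OF cf_sums]) (use q0 q1 in simp)
    have s2: "summable (\<lambda>n. Re (cinner (cf n *\<^sub>R (T^^n) x) x))"
      by (rule bounded_linear.summable[OF bounded_linear_Re sc])
    have "(\<Sum>n. cf n * q^n * (norm x)^2) \<le> (\<Sum>n. Re (cinner (cf n *\<^sub>R (T^^n) x) x))"
    proof (rule suminf_le[OF _ sums_summable[OF s1] s2])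
      fix n show "cf n * q^n * (norm x)^2 \<le> Re (cinner (cf n *\<^sub>R (T^^n) x) x)"
      proof (cases "n = 0")
        case True thus ?thesis by (simp add: Re_cinner_self)
      next
        case False
        have "Re (cinner ((T^^n) x) x) \<le> cmod (cinner ((T^^n) x) x)" by (rule complex_Re_le_cmod)
        also have "\<dots> \<le> norm ((T^^n) x) * norm x" by (rule Cauchy_Schwarz)
        also have "\<dots> \<le> q^n * norm x * norm x" by (intro mult_right_mono pow_bound[OF bT Tn q0]) auto
        finally have "Re (cinner ((T^^n) x) x) \<le> q^n * (norm x)^2" by (simp add: power2_eq_square mult.assoc)
        hence "cf n * (q^n * (norm x)^2) \<le> cf n * Re (cinner ((T^^n) x) x)"
          using cf_nonpos[of n] False by (intro mult_left_mono_neg) auto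
        thus ?thesis by (simp add: term_eq mult.assoc)
      qed
    qed
    also have "\<dots> = Re (cinner (blinfun_apply Rb x) x)" unfolding qf Re_suminf[OF sc] ..
    finally show ?thesis using sums_unique[OF s1] by simp
  qed
  define \<delta> where "\<delta> = sqrt c * sqrt (1 - q)"
  have \<delta>: "\<delta> > 0" unfolding \<delta>_def using c q1 by simp
  have Rcinner: "cinner (R x) x = complex_of_real (sqrt c) * cinner (blinfun_apply Rb x) x" for x
    by (simp add: R_def scaleC_real[symmetric] cinner_scaleC_left)
  have coR: "\<delta> * (norm x)^2 \<le> Re (cinner (R x) x)" for x
  proof -
    have "\<delta> * (norm x)^2 = sqrt c * (sqrt (1 - q) * (norm x)^2)" by (simp add: \<delta>_def)
    also have "\<dots> \<le> sqrt c * Re (cinner (blinfun_apply Rb x) x)" using ReR[of x] c by (intro mult_left_mono) auto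
    finally show ?thesis by (simp add: Rcinner)
  qed
  have pR: "positive_op R"
    unfolding positive_op_def
  proof (intro conjI allI bR)
    fix x
    show "Im (cinner (R x) x) = 0" by (simp add: Rcinner ImR)
    show "0 \<le> Re (cinner (R x) x)" using coR[of x] \<delta> by (meson order_trans zero_le_mult_iff zero_le_power2 less_imp_le)
  qed
  have comm: "\<forall>x. A (R x) = R (A x)" if bA: "bcl A" and AS: "\<forall>x. A (S x) = S (A x)" for A
  proof
    have AT: "A (T x) = T (A x)" for x using AS by (simp add: Tx bcl_diff[OF bA] bcl_scaleR[OF bA])
    have ATn: "A ((T^^n) x) = (T^^n) (A x)" for n x by (induction n) (simp_all add: AT)
    fix x
    have "A (blinfun_apply Rb x) = (\<Sum>n. A (cf n *\<^sub>R (T^^n) x))"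
      unfolding Rb_apply by (rule bounded_linear.suminf[OF bcl_bounded_linear[OF bA] sv])
    also have "\<dots> = blinfun_apply Rb (A x)" by (simp add: Rb_apply bcl_scaleR[OF bA] ATn)
    finally show "A (R x) = R (A x)" by (simp add: R_def bcl_scaleR[OF bA])
  qed
  show ?thesis using pR RR \<delta> coR comm by blast
qed

lemma sqrt_main:
  fixes S :: "'h::chilbert_space \<Rightarrow> 'h"
  assumes pS: "positive_op S" and co: "\<And>x. a * (norm x)^2 \<le> Re (cinner (S x) x)" and a: "a > 0"
  shows "op_sqrt S \<in> GL_pos" "op_sqrt S \<circ> op_sqrt S = S"
    "\<And>A. positive_op A \<Longrightarrow> A \<circ> A = S \<Longrightarrow> A = op_sqrt S"
proof -
  obtain R \<delta> where pR: "positive_op R" and RR: "\<And>x. R (R x) = S x" and \<delta>: "\<delta> > 0"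
    and coR: "\<And>x. \<delta> * (norm x)^2 \<le> Re (cinner (R x) x)"
    and comm: "\<And>A. bcl A \<Longrightarrow> (\<forall>x. A (S x) = S (A x)) \<Longrightarrow> (\<forall>x. A (R x) = R (A x))"
    using sqrt_exists[OF pS co a] by blast
  have bR: "bcl R" using pR by (rule positive_bcl)
  have uniq: "A = R" if pA: "positive_op A" and AA: "A \<circ> A = S" for A
  proof
    fix x
    have bA: "bcl A" using pA by (rule positive_bcl)
    have AAx: "A (A y) = S y" for y using AA by (metis comp_apply)
    have "\<forall>y. A (S y) = S (A y)" by (simp add: AAx[symmetric])
    hence AR: "A (R y) = R (A y)" for y using comm[OF bA] by blast
    define \<psi> where "\<psi> = R x - A x"
    have "R \<psi> + A \<psi> = 0" unfolding \<psi>_def by (simp add: bcl_diff[OF bR] bcl_diff[OF bA] RR AAx AR)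
    hence "Re (cinner (R \<psi>) \<psi>) + Re (cinner (A \<psi>) \<psi>) = 0"
      by (metis cinner_add_left ci.zero_left plus_complex.sel(1) zero_complex.sel(1))
    moreover have "Re (cinner (A \<psi>) \<psi>) \<ge> 0" using pA by (simp add: positive_op_def)
    ultimately have "\<delta> * (norm \<psi>)^2 \<le> 0" using coR[of \<psi>] by linarith
    hence "norm \<psi> = 0" using \<delta> by (simp add: mult_le_0_iff)
    thus "A x = R x" unfolding \<psi>_def by simp
  qed
  have RRc: "R \<circ> R = S"
  proof
    fix x show "(R \<circ> R) x = S x" using RR[of x] by (simp only: comp_apply)
  qed
  have os: "op_sqrt S = R" unfolding op_sqrt_def
  proof (rule the_equality)
    show "positive_op R \<and> R \<circ> R = S" using pR RRc by blast
    show "\<And>A. positive_op A \<and> A \<circ> A = S \<Longrightarrow> A = R" using uniq by blast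
  qed
  show "op_sqrt S \<in> GL_pos" unfolding os GL_pos_def using coercive_GL[OF bR coR \<delta>] pR by simp
  show "op_sqrt S \<circ> op_sqrt S = S" unfolding os by (rule RRc)
  show "\<And>A. positive_op A \<Longrightarrow> A \<circ> A = S \<Longrightarrow> A = op_sqrt S" unfolding os by (rule uniq)
qed

section \<open>Frames: measurability and integrability\<close>

lemma meas_cnj: "g \<in> borel_measurable M \<Longrightarrow> (\<lambda>x. cnj (g x :: complex)) \<in> borel_measurable M"
  by (rule borel_measurable_continuous_on[OF linear_continuous_on[OF bounded_linear_cnj]])

lemma wm_left: "weakly_measurable \<mu> f \<Longrightarrow> (\<lambda>x. cinner \<phi> (f x)) \<in> borel_measurable \<mu>"
  by (simp add: weakly_measurable_def)

lemma wm_right: "weakly_measurable \<mu> f \<Longrightarrow> (\<lambda>x. cinner (f x) \<psi>) \<in> borel_measurable \<mu>"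
  by (subst cinner_commute) (rule meas_cnj[OF wm_left])

lemma wm_prod: "weakly_measurable \<mu> f \<Longrightarrow> (\<lambda>x. cinner \<phi> (f x) * cinner (f x) \<psi>) \<in> borel_measurable \<mu>"
  by (intro borel_measurable_times wm_left wm_right)

lemma wm_sqr: "weakly_measurable \<mu> f \<Longrightarrow> (\<lambda>x. (cmod (cinner \<phi> (f x)))\<^sup>2) \<in> borel_measurable \<mu>"
  by (intro borel_measurable_power measurable_compose[OF wm_left borel_measurable_norm])

lemma wm_sq: "weakly_measurable \<mu> f \<Longrightarrow> (\<lambda>x. ennreal ((cmod (cinner \<phi> (f x)))\<^sup>2)) \<in> borel_measurable \<mu>"
  by (rule measurable_compose[OF wm_sqr measurable_ennreal])

definition upper_fr :: "'x measure \<Rightarrow> ('x \<Rightarrow> 'h::chilbert_space) \<Rightarrow> real \<Rightarrow> bool" where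
  "upper_fr \<mu> f B \<longleftrightarrow> weakly_measurable \<mu> f \<and> B \<ge> 0 \<and>
     (\<forall>\<phi>. (\<integral>\<^sup>+ x. ennreal ((cmod (cinner \<phi> (f x)))\<^sup>2) \<partial>\<mu>) \<le> ennreal (B * (norm \<phi>)\<^sup>2))"

lemma upper_fin: "upper_fr \<mu> f B \<Longrightarrow> (\<integral>\<^sup>+ x. ennreal ((cmod (cinner \<phi> (f x)))\<^sup>2) \<partial>\<mu>) < \<infinity>"
proof -
  assume "upper_fr \<mu> f B"
  hence "(\<integral>\<^sup>+ x. ennreal ((cmod (cinner \<phi> (f x)))\<^sup>2) \<partial>\<mu>) \<le> ennreal (B * (norm \<phi>)\<^sup>2)"
    unfolding upper_fr_def by blast
  also have "\<dots> < \<infinity>" by simp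
  finally show ?thesis .
qed

lemma integrable_prod:
  assumes u: "upper_fr \<mu> f B"
  shows "integrable \<mu> (\<lambda>x. cinner \<phi> (f x) * cinner (f x) \<psi>)"
proof (subst integrable_iff_bounded, intro conjI)
  have wm: "weakly_measurable \<mu> f" using u by (simp add: upper_fr_def)
  show "(\<lambda>x. cinner \<phi> (f x) * cinner (f x) \<psi>) \<in> borel_measurable \<mu>" by (rule wm_prod[OF wm])
  have pt: "ennreal (norm (cinner \<phi> (f x) * cinner (f x) \<psi>)) \<le>
      ennreal ((cmod (cinner \<phi> (f x)))\<^sup>2) + ennreal ((cmod (cinner \<psi> (f x)))\<^sup>2)" for x
  proof -
    have e: "cmod (cinner (f x) \<psi>) = cmod (cinner \<psi> (f x))"
      using cinner_commute[of "f x" \<psi>] by (simp only: complex_mod_cnj)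
    define p where "p = cmod (cinner \<phi> (f x))"
    define r where "r = cmod (cinner \<psi> (f x))"
    have "2 * p * r \<le> p\<^sup>2 + r\<^sup>2" by (rule sum_squares_bound)
    moreover have "0 \<le> p * r" unfolding p_def r_def by simp
    ultimately have "p * r \<le> p\<^sup>2 + r\<^sup>2" by linarith
    hence "cmod (cinner \<phi> (f x)) * cmod (cinner \<psi> (f x)) \<le> (cmod (cinner \<phi> (f x)))\<^sup>2 + (cmod (cinner \<psi> (f x)))\<^sup>2"
      unfolding p_def r_def .
    thus ?thesis by (simp add: norm_mult e ennreal_plus[symmetric] del: ennreal_plus)
  qed
  have "(\<integral>\<^sup>+ x. ennreal (norm (cinner \<phi> (f x) * cinner (f x) \<psi>)) \<partial>\<mu>) \<le>
        (\<integral>\<^sup>+ x. ennreal ((cmod (cinner \<phi> (f x)))\<^sup>2) + ennreal ((cmod (cinner \<psi> (f x)))\<^sup>2) \<partial>\<mu>)"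
    by (rule nn_integral_mono) (rule pt)
  also have "\<dots> = (\<integral>\<^sup>+ x. ennreal ((cmod (cinner \<phi> (f x)))\<^sup>2) \<partial>\<mu>) + (\<integral>\<^sup>+ x. ennreal ((cmod (cinner \<psi> (f x)))\<^sup>2) \<partial>\<mu>)"
    by (rule nn_integral_add[OF wm_sq[OF wm] wm_sq[OF wm]])
  also have "\<dots> < \<infinity>" using upper_fin[OF u] by simp
  finally show "(\<integral>\<^sup>+ x. ennreal (norm (cinner \<phi> (f x) * cinner (f x) \<psi>)) \<partial>\<mu>) < \<infinity>" .
qed

definition fform :: "'x measure \<Rightarrow> ('x \<Rightarrow> 'h::chilbert_space) \<Rightarrow> 'h \<Rightarrow> 'h \<Rightarrow> complex" where
  "fform \<mu> f \<phi> \<psi> = (LINT x|\<mu>. cinner \<phi> (f x) * cinner (f x) \<psi>)"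

lemma fform_diag:
  assumes u: "upper_fr \<mu> f B"
  shows "fform \<mu> f \<phi> \<phi> = complex_of_real (enn2real (\<integral>\<^sup>+ x. ennreal ((cmod (cinner \<phi> (f x)))\<^sup>2) \<partial>\<mu>))"
    and "(\<integral>\<^sup>+ x. ennreal ((cmod (cinner \<phi> (f x)))\<^sup>2) \<partial>\<mu>) = ennreal (Re (fform \<mu> f \<phi> \<phi>))"
proof -
  have wm: "weakly_measurable \<mu> f" using u by (simp add: upper_fr_def)
  have pt: "cinner \<phi> (f x) * cinner (f x) \<phi> = complex_of_real ((cmod (cinner \<phi> (f x)))\<^sup>2)" for x
    by (subst (2) cinner_commute) (rule complex_norm_square[symmetric])
  have mr: "(\<lambda>x. (cmod (cinner \<phi> (f x)))\<^sup>2) \<in> borel_measurable \<mu>"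
    by (rule wm_sqr[OF wm])
  have ir: "integrable \<mu> (\<lambda>x. (cmod (cinner \<phi> (f x)))\<^sup>2)"
    by (subst integrable_iff_bounded) (use mr upper_fin[OF u, of \<phi>] in simp)
  have ni: "(\<integral>\<^sup>+ x. ennreal ((cmod (cinner \<phi> (f x)))\<^sup>2) \<partial>\<mu>) = ennreal (LINT x|\<mu>. (cmod (cinner \<phi> (f x)))\<^sup>2)"
    by (rule nn_integral_eq_integral[OF ir]) simp
  have ff: "fform \<mu> f \<phi> \<phi> = complex_of_real (LINT x|\<mu>. (cmod (cinner \<phi> (f x)))\<^sup>2)"
    unfolding fform_def pt by (rule integral_complex_of_real)
  have nn: "(LINT x|\<mu>. (cmod (cinner \<phi> (f x)))\<^sup>2) \<ge> 0" by (rule integral_nonneg_AE) simp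
  show "fform \<mu> f \<phi> \<phi> = complex_of_real (enn2real (\<integral>\<^sup>+ x. ennreal ((cmod (cinner \<phi> (f x)))\<^sup>2) \<partial>\<mu>))"
    unfolding ff ni using nn by simp
  show "(\<integral>\<^sup>+ x. ennreal ((cmod (cinner \<phi> (f x)))\<^sup>2) \<partial>\<mu>) = ennreal (Re (fform \<mu> f \<phi> \<phi>))"
    unfolding ff ni by simp
qed

lemma fform_sesq: assumes u: "upper_fr \<mu> f B" shows "sesq (fform \<mu> f)"
proof
  fix x y z
  show "fform \<mu> f (x + y) z = fform \<mu> f x z + fform \<mu> f y z"
    unfolding fform_def
    by (simp add: cinner_add_left distrib_right integrable_prod[OF u])
next
  fix c x z
  show "fform \<mu> f (c *\<^sub>C x) z = c * fform \<mu> f x z"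
    unfolding fform_def by (simp add: cinner_scaleC_left mult.assoc)
next
  fix x y
  have "cnj (fform \<mu> f y x) = (LINT t|\<mu>. cnj (cinner y (f t) * cinner (f t) x))"
    unfolding fform_def by (simp only: Bochner_Integration.integral_cnj)
  also have "\<dots> = fform \<mu> f x y" unfolding fform_def
    by (rule Bochner_Integration.integral_cong) (simp_all, subst (1 2) cinner_commute, simp add: mult.commute)
  finally show "fform \<mu> f x y = cnj (fform \<mu> f y x)" by simp
qed

lemma fform_Re_le: assumes u: "upper_fr \<mu> f B" shows "Re (fform \<mu> f \<phi> \<phi>) \<le> B * (norm \<phi>)\<^sup>2"
proof -
  have "ennreal (Re (fform \<mu> f \<phi> \<phi>)) \<le> ennreal (B * (norm \<phi>)\<^sup>2)"
    using fform_diag(2)[OF u, of \<phi>] u unfolding upper_fr_def by metis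
  moreover have "B * (norm \<phi>)\<^sup>2 \<ge> 0" using u by (simp add: upper_fr_def)
  ultimately show ?thesis by (simp add: ennreal_le_iff)
qed

lemma fform_Re_nonneg: assumes u: "upper_fr \<mu> f B" shows "Re (fform \<mu> f \<phi> \<phi>) \<ge> 0"
  using fform_diag(1)[OF u, of \<phi>] by simp

lemma fform_real: assumes u: "upper_fr \<mu> f B" shows "Im (fform \<mu> f \<phi> \<phi>) = 0"
  using fform_diag(1)[OF u, of \<phi>] by simp

lemma fform_bound: assumes u: "upper_fr \<mu> f B" shows "cmod (fform \<mu> f \<phi> \<psi>) \<le> B * norm \<phi> * norm \<psi>"
proof -
  interpret F: sesq "fform \<mu> f" by (rule fform_sesq[OF u])
  have B0: "B \<ge> 0" using u by (simp add: upper_fr_def)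
  have "(cmod (fform \<mu> f \<phi> \<psi>))\<^sup>2 \<le> Re (fform \<mu> f \<phi> \<phi>) * Re (fform \<mu> f \<psi> \<psi>)"
    by (rule F.CS) (rule fform_Re_nonneg[OF u])
  also have "\<dots> \<le> (B * (norm \<phi>)\<^sup>2) * (B * (norm \<psi>)\<^sup>2)"
    by (intro mult_mono fform_Re_le[OF u] fform_Re_nonneg[OF u]) (use B0 in simp)
  also have "\<dots> = (B * norm \<phi> * norm \<psi>)\<^sup>2" by (simp add: power2_eq_square)
  finally show ?thesis using B0 by (simp add: power2_le_iff_abs_le)
qed

lemma frame_op_char:
  assumes u: "upper_fr \<mu> f B"
  shows "bcl (frame_op \<mu> f)" "\<And>\<phi> \<psi>. cinner (frame_op \<mu> f \<phi>) \<psi> = fform \<mu> f \<phi> \<psi>"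
proof -
  interpret F: sesq "fform \<mu> f" by (rule fform_sesq[OF u])
  have B0: "B \<ge> 0" using u by (simp add: upper_fr_def)
  have ex: "\<exists>w. \<forall>\<psi>. cinner w \<psi> = fform \<mu> f \<phi> \<psi>" for \<phi>
  proof -
    have "\<exists>w. \<forall>\<psi>. cnj (fform \<mu> f \<phi> \<psi>) = cinner \<psi> w"
    proof (rule riesz[where K="B * norm \<phi>"])
      show "cnj (fform \<mu> f \<phi> (x + y)) = cnj (fform \<mu> f \<phi> x) + cnj (fform \<mu> f \<phi> y)" for x y
        by (simp add: F.add_right)
      show "cnj (fform \<mu> f \<phi> (c *\<^sub>C x)) = c * cnj (fform \<mu> f \<phi> x)" for c x
        by (simp add: F.scale_right)
      show "cmod (cnj (fform \<mu> f \<phi> x)) \<le> B * norm \<phi> * norm x" for x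
        using fform_bound[OF u] by simp
    qed
    then obtain w where w: "\<And>\<psi>. cnj (fform \<mu> f \<phi> \<psi>) = cinner \<psi> w" by blast
    show ?thesis
    proof (intro exI allI)
      fix \<psi> show "cinner w \<psi> = fform \<mu> f \<phi> \<psi>" using w[of \<psi>] by (subst cinner_commute) (metis complex_cnj_cnj)
    qed
  qed
  define S where "S \<phi> = (SOME w. \<forall>\<psi>. cinner w \<psi> = fform \<mu> f \<phi> \<psi>)" for \<phi>
  have Sp: "cinner (S \<phi>) \<psi> = fform \<mu> f \<phi> \<psi>" for \<phi> \<psi>
    unfolding S_def using someI_ex[OF ex[of \<phi>]] by blast
  have bS: "bcl S"
  proof (rule bclI[where K=B])
    fix x y show "S (x + y) = S x + S y"
      by (rule cinner_ext) (simp add: Sp cinner_add_left F.add_left)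
  next
    fix c x show "S (c *\<^sub>C x) = c *\<^sub>C S x"
      by (rule cinner_ext) (simp add: Sp cinner_scaleC_left F.scale_left)
  next
    fix x
    have "(norm (S x))\<^sup>2 = Re (cinner (S x) (S x))" by (simp add: Re_cinner_self)
    also have "\<dots> \<le> cmod (fform \<mu> f x (S x))" unfolding Sp by (rule complex_Re_le_cmod)
    also have "\<dots> \<le> B * norm x * norm (S x)" by (rule fform_bound[OF u])
    finally have "norm (S x) * norm (S x) \<le> (B * norm x) * norm (S x)" by (simp add: power2_eq_square)
    thus "norm (S x) \<le> B * norm x"
      using B0 by (cases "norm (S x) = 0") (auto simp: mult_le_cancel_right)
  qed
  have fo: "frame_op \<mu> f = S" unfolding frame_op_def
  proof (rule the_equality)
    show "bcl S \<and> (\<forall>\<phi> \<psi>. cinner (S \<phi>) \<psi> = (LINT x|\<mu>. cinner \<phi> (f x) * cinner (f x) \<psi>))"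
      using bS Sp by (simp add: fform_def)
    fix S' assume "bcl S' \<and> (\<forall>\<phi> \<psi>. cinner (S' \<phi>) \<psi> = (LINT x|\<mu>. cinner \<phi> (f x) * cinner (f x) \<psi>))"
    hence "cinner (S' \<phi>) \<psi> = cinner (S \<phi>) \<psi>" for \<phi> \<psi> by (simp add: Sp fform_def)
    thus "S' = S" by (intro ext cinner_ext) auto
  qed
  show "bcl (frame_op \<mu> f)" unfolding fo by (rule bS)
  show "\<And>\<phi> \<psi>. cinner (frame_op \<mu> f \<phi>) \<psi> = fform \<mu> f \<phi> \<psi>" unfolding fo by (rule Sp)
qed

lemma frame_op_eqI:
  assumes u: "upper_fr \<mu> f B" and "\<And>\<phi> \<psi>. cinner (S' \<phi>) \<psi> = fform \<mu> f \<phi> \<psi>"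
  shows "frame_op \<mu> f = S'"
  by (intro ext cinner_ext) (simp add: assms frame_op_char[OF u])

lemma parseval_upper: assumes "parseval_frame \<mu> g" shows "upper_fr \<mu> g 1"
  using assms unfolding parseval_frame_def upper_fr_def by simp

lemma fform_parseval: assumes p: "parseval_frame \<mu> g" shows "fform \<mu> g \<phi> \<psi> = cinner \<phi> \<psi>"
proof -
  have u: "upper_fr \<mu> g 1" by (rule parseval_upper[OF p])
  interpret F: sesq "fform \<mu> g" by (rule fform_sesq[OF u])
  have "fform \<mu> g \<phi> \<psi> - cinner \<phi> \<psi> = 0"
  proof (rule polar_zero[where D="\<lambda>\<phi> \<psi>. fform \<mu> g \<phi> \<psi> - cinner \<phi> \<psi>"])
    fix x
    have "fform \<mu> g x x = complex_of_real ((norm x)\<^sup>2)"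
      using fform_diag(1)[OF u, of x] p unfolding parseval_frame_def by simp
    thus "fform \<mu> g x x - cinner x x = 0" by (simp add: cinner_self)
  qed (simp_all add: F.add_left F.add_right F.scale_left F.scale_right cinner_simps algebra_simps)
  thus ?thesis by simp
qed

lemma bparseval_D: assumes "g \<in> bparseval_frames \<mu>"
  shows "parseval_frame \<mu> g" "weakly_measurable \<mu> g"
    "\<And>\<phi>. (\<integral>\<^sup>+ x. ennreal ((cmod (cinner \<phi> (g x)))\<^sup>2) \<partial>\<mu>) = ennreal ((norm \<phi>)\<^sup>2)"
    "\<exists>C. \<forall>x. norm (g x) \<le> C"
  using assms unfolding bparseval_frames_def parseval_frame_def by auto

lemma GL_comp_parseval:
  fixes A :: "'h::chilbert_space \<Rightarrow> 'h" and g :: "'x \<Rightarrow> 'h"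
  assumes AG: "A \<in> GL" and g: "g \<in> bparseval_frames \<mu>"
  shows "A \<circ> g \<in> bframes \<mu>" "\<exists>B. upper_fr \<mu> (A \<circ> g) B" "frame_op \<mu> (A \<circ> g) = A \<circ> adj A"
proof -
  note gD = bparseval_D[OF g]
  have bA: "bcl A" and bAi: "bcl (inv A)" and AAi: "\<And>x. A (inv A x) = x" using GL_D[OF AG] by auto
  obtain K where K: "K > 0" "\<And>x. norm (adj A x) \<le> K * norm x" using bcl_bound[OF bcl_adj[OF bA]] by blast
  obtain L where L: "L > 0" "\<And>x. norm (inv A x) \<le> L * norm x" using bcl_bound[OF bAi] by blast
  obtain KA where KA: "KA > 0" "\<And>x. norm (A x) \<le> KA * norm x" using bcl_bound[OF bA] by blast
  obtain C where C: "\<And>x. norm (g x) \<le> C" using gD(4) by blast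
  have ci: "cinner \<phi> ((A \<circ> g) x) = cinner (adj A \<phi>) (g x)" for \<phi> x
    by (simp add: adj_prop'[OF bA])
  have wm: "weakly_measurable \<mu> (A \<circ> g)"
    unfolding weakly_measurable_def ci using gD(2) by (simp add: weakly_measurable_def)
  have nn: "(\<integral>\<^sup>+ x. ennreal ((cmod (cinner \<phi> ((A \<circ> g) x)))\<^sup>2) \<partial>\<mu>) = ennreal ((norm (adj A \<phi>))\<^sup>2)" for \<phi>
    unfolding ci by (rule gD(3))
  have up: "(norm (adj A \<phi>))\<^sup>2 \<le> K\<^sup>2 * (norm \<phi>)\<^sup>2" for \<phi>
    using K(2)[of \<phi>] by (simp add: power_mult_distrib[symmetric] power_mono)
  have lo: "(1 / L\<^sup>2) * (norm \<phi>)\<^sup>2 \<le> (norm (adj A \<phi>))\<^sup>2" for \<phi>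
  proof -
    have "(norm \<phi>)\<^sup>2 = Re (cinner (A (inv A \<phi>)) \<phi>)" by (simp add: AAi Re_cinner_self)
    also have "\<dots> = Re (cinner (inv A \<phi>) (adj A \<phi>))" by (simp add: adj_prop[OF bA])
    also have "\<dots> \<le> cmod (cinner (inv A \<phi>) (adj A \<phi>))" by (rule complex_Re_le_cmod)
    also have "\<dots> \<le> norm (inv A \<phi>) * norm (adj A \<phi>)" by (rule Cauchy_Schwarz)
    also have "\<dots> \<le> L * norm \<phi> * norm (adj A \<phi>)" by (intro mult_right_mono L) auto
    finally have "norm \<phi> * norm \<phi> \<le> (L * norm (adj A \<phi>)) * norm \<phi>" by (simp add: power2_eq_square ac_simps)
    hence "norm \<phi> \<le> L * norm (adj A \<phi>)"
      using L by (cases "norm \<phi> = 0") (auto simp: mult_le_cancel_right)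
    hence "(norm \<phi>)\<^sup>2 \<le> (L * norm (adj A \<phi>))\<^sup>2" by (intro power_mono) auto
    thus ?thesis using L by (simp add: field_simps power_mult_distrib)
  qed
  define Bf where "Bf = max (K\<^sup>2) (1 / L\<^sup>2)"
  have upper: "upper_fr \<mu> (A \<circ> g) Bf"
    unfolding upper_fr_def
  proof (intro conjI allI wm)
    show "Bf \<ge> 0" unfolding Bf_def by (rule order_trans[OF _ max.cobounded1]) simp
    fix \<phi> :: 'h
    have "K\<^sup>2 * (norm \<phi>)\<^sup>2 \<le> Bf * (norm \<phi>)\<^sup>2" unfolding Bf_def by (intro mult_right_mono) auto
    thus "(\<integral>\<^sup>+ x. ennreal ((cmod (cinner \<phi> ((A \<circ> g) x)))\<^sup>2) \<partial>\<mu>) \<le> ennreal (Bf * (norm \<phi>)\<^sup>2)"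
      unfolding nn using up[of \<phi>] by (intro ennreal_leI) linarith
  qed
  thus "\<exists>B. upper_fr \<mu> (A \<circ> g) B" by blast
  have lo': "ennreal (1 / L\<^sup>2 * (norm \<phi>)\<^sup>2) \<le> (\<integral>\<^sup>+ x. ennreal ((cmod (cinner \<phi> ((A \<circ> g) x)))\<^sup>2) \<partial>\<mu>)" for \<phi>
    unfolding nn using lo[of \<phi>] by (intro ennreal_leI)
  have hi': "(\<integral>\<^sup>+ x. ennreal ((cmod (cinner \<phi> ((A \<circ> g) x)))\<^sup>2) \<partial>\<mu>) \<le> ennreal (Bf * (norm \<phi>)\<^sup>2)" for \<phi>
    using upper unfolding upper_fr_def by blast
  have c1: "0 < 1 / L\<^sup>2" using L by simp
  have c2: "1 / L\<^sup>2 \<le> Bf" unfolding Bf_def by simp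
  have "frame \<mu> (A \<circ> g)"
    unfolding frame_def using wm lo' hi' c1 c2 by blast
  moreover have "\<forall>x. norm ((A \<circ> g) x) \<le> KA * C"
  proof
    fix x have "norm (A (g x)) \<le> KA * norm (g x)" by (rule KA)
    also have "\<dots> \<le> KA * C" using KA C by (intro mult_left_mono) auto
    finally show "norm ((A \<circ> g) x) \<le> KA * C" by simp
  qed
  ultimately show "A \<circ> g \<in> bframes \<mu>" unfolding bframes_def by blast
  show "frame_op \<mu> (A \<circ> g) = A \<circ> adj A"
  proof (rule frame_op_eqI[OF upper])
    fix \<phi> \<psi> :: 'h
    have "cinner ((A \<circ> adj A) \<phi>) \<psi> = cinner (adj A \<phi>) (adj A \<psi>)" by (simp add: adj_prop[OF bA])
    also have "\<dots> = fform \<mu> g (adj A \<phi>) (adj A \<psi>)" by (rule fform_parseval[OF gD(1), symmetric])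
    also have "\<dots> = fform \<mu> (A \<circ> g) \<phi> \<psi>" unfolding fform_def
      by (simp add: adj_prop[OF bA] adj_prop'[OF bA])
    finally show "cinner ((A \<circ> adj A) \<phi>) \<psi> = fform \<mu> (A \<circ> g) \<phi> \<psi>" .
  qed
qed

lemma bframe_props:
  assumes f: "f \<in> bframes \<mu>"
  obtains B a where "upper_fr \<mu> f B" "a > 0" "\<And>\<phi>. a * (norm \<phi>)\<^sup>2 \<le> Re (fform \<mu> f \<phi> \<phi>)"
    "\<exists>C. \<forall>x. norm (f x) \<le> C"
proof -
  from f obtain A B where wm: "weakly_measurable \<mu> f" and AB: "0 < A" "A \<le> B"
    and lo: "\<And>\<phi>. ennreal (A * (norm \<phi>)\<^sup>2) \<le> (\<integral>\<^sup>+ x. ennreal ((cmod (cinner \<phi> (f x)))\<^sup>2) \<partial>\<mu>)"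
    and hi: "\<And>\<phi>. (\<integral>\<^sup>+ x. ennreal ((cmod (cinner \<phi> (f x)))\<^sup>2) \<partial>\<mu>) \<le> ennreal (B * (norm \<phi>)\<^sup>2)"
    and bd: "\<exists>C. \<forall>x. norm (f x) \<le> C"
    unfolding bframes_def frame_def by blast
  have u: "upper_fr \<mu> f B" unfolding upper_fr_def using wm AB hi by simp
  have "A * (norm \<phi>)\<^sup>2 \<le> Re (fform \<mu> f \<phi> \<phi>)" for \<phi>
  proof -
    have "ennreal (A * (norm \<phi>)\<^sup>2) \<le> ennreal (Re (fform \<mu> f \<phi> \<phi>))"
      using lo[of \<phi>] fform_diag(2)[OF u, of \<phi>] by simp
    thus ?thesis using fform_Re_nonneg[OF u] by (simp add: ennreal_le_iff)
  qed
  thus ?thesis using that[OF u AB(1)] bd by blast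
qed

lemma frame_op_positive:
  assumes u: "upper_fr \<mu> f B" shows "positive_op (frame_op \<mu> f)"
  unfolding positive_op_def
  using frame_op_char[OF u] fform_Re_nonneg[OF u] fform_real[OF u] by simp

lemma frame_nn_op: assumes u: "upper_fr \<mu> f B"
  shows "(\<integral>\<^sup>+ x. ennreal ((cmod (cinner \<phi> (f x)))\<^sup>2) \<partial>\<mu>) = ennreal (Re (cinner (frame_op \<mu> f \<phi>) \<phi>))"
  using fform_diag(2)[OF u] frame_op_char(2)[OF u] by simp

lemma GL_pos_D: "A \<in> GL_pos \<Longrightarrow> A \<in> GL" "A \<in> GL_pos \<Longrightarrow> positive_op A"
  by (auto simp: GL_pos_def)

lemma bframe_key:
  fixes f :: "'x \<Rightarrow> 'h::chilbert_space"
  assumes f: "f \<in> bframes \<mu>"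
  shows "op_sqrt (frame_op \<mu> f) \<in> GL_pos"
    "\<And>A. positive_op A \<Longrightarrow> A \<circ> A = frame_op \<mu> f \<Longrightarrow> A = op_sqrt (frame_op \<mu> f)"
    "frame_T \<mu> f \<in> bparseval_frames \<mu>"
    "f = op_sqrt (frame_op \<mu> f) \<circ> frame_T \<mu> f"
proof -
  obtain B a where u: "upper_fr \<mu> f B" and a: "a > 0"
    and co0: "\<And>\<phi>. a * (norm \<phi>)\<^sup>2 \<le> Re (fform \<mu> f \<phi> \<phi>)" and bd: "\<exists>C. \<forall>x. norm (f x) \<le> C"
    using bframe_props[OF f] by metis
  define S where "S = frame_op \<mu> f"
  have pS: "positive_op S" unfolding S_def by (rule frame_op_positive[OF u])
  have co: "a * (norm \<phi>)\<^sup>2 \<le> Re (cinner (S \<phi>) \<phi>)" for \<phi>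
    unfolding S_def frame_op_char(2)[OF u] by (rule co0)
  note sm = sqrt_main[OF pS co a]
  define R where "R = op_sqrt S"
  show "op_sqrt (frame_op \<mu> f) \<in> GL_pos" using sm(1) by (simp add: S_def)
  show "\<And>A. positive_op A \<Longrightarrow> A \<circ> A = frame_op \<mu> f \<Longrightarrow> A = op_sqrt (frame_op \<mu> f)"
    using sm(3) by (simp add: S_def)
  have RG: "R \<in> GL" and pR: "positive_op R" using sm(1) GL_pos_D unfolding R_def by auto
  have bR: "bcl R" and bRi: "bcl (inv R)" and RRi: "\<And>y. R (inv R y) = y" and RiR: "\<And>y. inv R (R y) = y"
    using GL_D[OF RG] by auto
  have RRx: "R (R y) = S y" for y using sm(2) unfolding R_def by (metis comp_apply)
  have Ri_sa: "cinner y (inv R z) = cinner (inv R y) z" for y z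
  proof -
    have "cinner (inv R y) z = cinner (inv R y) (R (inv R z))" by (simp add: RRi)
    also have "\<dots> = cinner (R (inv R y)) (inv R z)" by (rule positive_selfadj[OF pR, symmetric])
    finally show ?thesis by (simp add: RRi)
  qed
  have fT: "frame_T \<mu> f = (\<lambda>x. inv R (f x))"
    unfolding frame_T_def op_inv_sqrt_def R_def S_def ..
  have wmf: "weakly_measurable \<mu> f" using u by (simp add: upper_fr_def)
  have wm: "weakly_measurable \<mu> (\<lambda>x. inv R (f x))"
    unfolding weakly_measurable_def Ri_sa using wmf by (simp add: weakly_measurable_def)
  have nn: "(\<integral>\<^sup>+ x. ennreal ((cmod (cinner \<phi> (inv R (f x))))\<^sup>2) \<partial>\<mu>) = ennreal ((norm \<phi>)\<^sup>2)" for \<phi>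
  proof -
    have "(\<integral>\<^sup>+ x. ennreal ((cmod (cinner \<phi> (inv R (f x))))\<^sup>2) \<partial>\<mu>) =
          (\<integral>\<^sup>+ x. ennreal ((cmod (cinner (inv R \<phi>) (f x)))\<^sup>2) \<partial>\<mu>)" by (simp add: Ri_sa)
    also have "\<dots> = ennreal (Re (cinner (S (inv R \<phi>)) (inv R \<phi>)))"
      unfolding S_def by (rule frame_nn_op[OF u])
    also have "S (inv R \<phi>) = R \<phi>" by (simp add: RRx[symmetric] RRi)
    also have "cinner (R \<phi>) (inv R \<phi>) = cinner \<phi> \<phi>" by (simp add: positive_selfadj[OF pR] RRi)
    finally show ?thesis by (simp add: Re_cinner_self)
  qed
  obtain C where C: "\<And>x. norm (f x) \<le> C" using bd by blast
  obtain L where L: "L > 0" "\<And>y. norm (inv R y) \<le> L * norm y" using bcl_bound[OF bRi] by blast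
  have "\<forall>x. norm (inv R (f x)) \<le> L * C"
  proof
    fix x have "norm (inv R (f x)) \<le> L * norm (f x)" by (rule L)
    also have "\<dots> \<le> L * C" using L C by (intro mult_left_mono) auto
    finally show "norm (inv R (f x)) \<le> L * C" .
  qed
  thus "frame_T \<mu> f \<in> bparseval_frames \<mu>"
    unfolding fT bparseval_frames_def parseval_frame_def using wm nn by blast
  show "f = op_sqrt (frame_op \<mu> f) \<circ> frame_T \<mu> f"
    unfolding fT by (rule ext) (simp add: RRi R_def[symmetric] S_def[symmetric])
qed

lemma unitary_comp_parseval:
  assumes V: "V \<in> unitary_group" and g: "g \<in> bparseval_frames \<mu>"
  shows "V \<circ> g \<in> bparseval_frames \<mu>"
proof -
  note gD = bparseval_D[OF g]
  have ci: "cinner \<phi> ((V \<circ> g) x) = cinner (inv V \<phi>) (g x)" for \<phi> x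
    by (simp add: unitary_inv_cinner[OF V])
  have wm: "weakly_measurable \<mu> (V \<circ> g)"
    unfolding weakly_measurable_def ci using gD(2) by (simp add: weakly_measurable_def)
  have nv: "norm (inv V \<phi>) = norm \<phi>" for \<phi>
    using unitary_D(4)[OF V, of "inv V \<phi>"] GL_D(5)[OF unitary_GL[OF V]] by simp
  have nn: "(\<integral>\<^sup>+ x. ennreal ((cmod (cinner \<phi> ((V \<circ> g) x)))\<^sup>2) \<partial>\<mu>) = ennreal ((norm \<phi>)\<^sup>2)" for \<phi>
    unfolding ci gD(3) nv ..
  obtain C where C: "\<And>x. norm (g x) \<le> C" using gD(4) by blast
  have "\<forall>x. norm ((V \<circ> g) x) \<le> C" using C unitary_D(4)[OF V] by simp
  thus ?thesis unfolding bparseval_frames_def parseval_frame_def using wm nn by blast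
qed

lemma unitary_unique_parseval:
  assumes V1: "V1 \<in> unitary_group" and V2: "V2 \<in> unitary_group" and g: "parseval_frame \<mu> g"
    and eq: "V1 \<circ> g = V2 \<circ> g"
  shows "V1 = V2"
proof -
  have ii: "inv V1 \<phi> = inv V2 \<phi>" for \<phi>
  proof -
    define d where "d = inv V1 \<phi> - inv V2 \<phi>"
    have "cinner d (g x) = 0" for x
    proof -
      have "cinner d (g x) = cinner \<phi> (V1 (g x)) - cinner \<phi> (V2 (g x))"
        unfolding d_def by (simp add: ci.diff_left unitary_inv_cinner[OF V1] unitary_inv_cinner[OF V2])
      also have "V1 (g x) = V2 (g x)" using eq by (metis comp_apply)
      finally show ?thesis by simp
    qed
    hence z: "(\<integral>\<^sup>+ x. ennreal ((cmod (cinner d (g x)))\<^sup>2) \<partial>\<mu>) = 0" by simp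
    have "(\<integral>\<^sup>+ x. ennreal ((cmod (cinner d (g x)))\<^sup>2) \<partial>\<mu>) = ennreal ((norm d)\<^sup>2)"
      using g unfolding parseval_frame_def by blast
    hence "ennreal ((norm d)\<^sup>2) = 0" using z by simp
    hence "norm d = 0" by simp
    thus ?thesis unfolding d_def by simp
  qed
  have bj1: "bij V1" and bj2: "bij V2" using GL_D(2) unitary_GL V1 V2 by auto
  have "inv V1 = inv V2" using ii by (rule ext)
  hence "inv (inv V1) = inv (inv V2)" by simp
  thus ?thesis using bj1 bj2 by (simp add: inv_inv_eq)
qed

lemma transversal_facts:
  assumes tr: "transversal \<mu> Fb" and h: "h \<in> bparseval_frames \<mu>"
  shows "sigma_tr Fb h \<in> Fb" "U_tr Fb h \<in> unitary_group" "h = U_tr Fb h \<circ> sigma_tr Fb h"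
    "\<And>V g. V \<in> unitary_group \<Longrightarrow> g \<in> Fb \<Longrightarrow> h = V \<circ> g \<Longrightarrow> sigma_tr Fb h = g \<and> U_tr Fb h = V"
proof -
  have sub: "Fb \<subseteq> bparseval_frames \<mu>" and ex1: "\<exists>!g. g \<in> Fb \<and> (\<exists>V \<in> unitary_group. h = V \<circ> g)"
    using tr h unfolding transversal_def by auto
  have s: "sigma_tr Fb h \<in> Fb \<and> (\<exists>V \<in> unitary_group. h = V \<circ> sigma_tr Fb h)"
    unfolding sigma_tr_def by (rule theI'[OF ex1])
  then obtain V0 where V0: "V0 \<in> unitary_group" "h = V0 \<circ> sigma_tr Fb h" by blast
  have pg: "parseval_frame \<mu> (sigma_tr Fb h)" using s sub bparseval_D(1) by blast
  have uU: "U_tr Fb h = V0" unfolding U_tr_def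
  proof (rule the_equality)
    show "V0 \<in> unitary_group \<and> h = V0 \<circ> sigma_tr Fb h" using V0 by simp
    fix V assume "V \<in> unitary_group \<and> h = V \<circ> sigma_tr Fb h"
    thus "V = V0" using unitary_unique_parseval[OF _ V0(1) pg] V0(2) by metis
  qed
  show "sigma_tr Fb h \<in> Fb" using s by simp
  show "U_tr Fb h \<in> unitary_group" using uU V0 by simp
  show "h = U_tr Fb h \<circ> sigma_tr Fb h" using uU V0 by simp
  fix V g assume V: "V \<in> unitary_group" and g: "g \<in> Fb" and hv: "h = V \<circ> g"
  have sg: "sigma_tr Fb h = g" using ex1 s V g hv by blast
  have "V = V0" using unitary_unique_parseval[OF V V0(1) pg] V0(2) hv sg by metis
  thus "sigma_tr Fb h = g \<and> U_tr Fb h = V" using sg uU by simp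
qed

theorem mainTheorem19:
  fixes \<mu> :: "'x::topological_space measure"
    and Fb :: "('x \<Rightarrow> 'h::{chilbert_space, second_countable_topology}) set"
  assumes "locally_compact_space (euclidean :: 'x topology)"
    and "sets \<mu> = sets borel"
    and "transversal \<mu> Fb"
  shows "(bframes \<mu> :: ('x \<Rightarrow> 'h) set) = {A \<circ> V \<circ> g | A V g. A \<in> GL_pos \<and> V \<in> unitary_group \<and> g \<in> Fb}
       \<and> (bframes \<mu> :: ('x \<Rightarrow> 'h) set) = {A \<circ> g | A g. A \<in> GL \<and> g \<in> Fb}
       \<and> (bframes \<mu> :: ('x \<Rightarrow> 'h) set) = {A \<circ> g | A g. A \<in> GL_pos \<and> g \<in> bparseval_frames \<mu>}
       \<and> (\<forall>f \<in> (bframes \<mu> :: ('x \<Rightarrow> 'h) set).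
            frame_T \<mu> f \<in> bparseval_frames \<mu>
          \<and> op_sqrt (frame_op \<mu> f) \<in> GL_pos
          \<and> f = op_sqrt (frame_op \<mu> f) \<circ> U_tr Fb (frame_T \<mu> f) \<circ> sigma_tr Fb (frame_T \<mu> f)
          \<and> (\<forall>A V g. A \<in> GL_pos \<and> V \<in> unitary_group \<and> g \<in> Fb \<and> f = A \<circ> V \<circ> g \<longrightarrow>
               A = op_sqrt (frame_op \<mu> f) \<and> V = U_tr Fb (frame_T \<mu> f) \<and> g = sigma_tr Fb (frame_T \<mu> f)))"
proof -
  have sub: "Fb \<subseteq> bparseval_frames \<mu>" using assms(3) unfolding transversal_def by blast
  note tf = transversal_facts[OF assms(3)]
  have GLp_GL: "A \<in> GL" if "A \<in> GL_pos" for A :: "'h \<Rightarrow> 'h" using that by (simp add: GL_pos_def)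
  have decomp: "f = op_sqrt (frame_op \<mu> f) \<circ> U_tr Fb (frame_T \<mu> f) \<circ> sigma_tr Fb (frame_T \<mu> f)"
    if f: "f \<in> bframes \<mu>" for f :: "'x \<Rightarrow> 'h"
  proof -
    have h: "frame_T \<mu> f \<in> bparseval_frames \<mu>" by (rule bframe_key(3)[OF f])
    have e1: "f = op_sqrt (frame_op \<mu> f) \<circ> frame_T \<mu> f" by (rule bframe_key(4)[OF f])
    have e2: "frame_T \<mu> f = U_tr Fb (frame_T \<mu> f) \<circ> sigma_tr Fb (frame_T \<mu> f)" by (rule tf(3)[OF h])
    have "f = op_sqrt (frame_op \<mu> f) \<circ> (U_tr Fb (frame_T \<mu> f) \<circ> sigma_tr Fb (frame_T \<mu> f))"
      using e1 arg_cong[OF e2, of "\<lambda>k. op_sqrt (frame_op \<mu> f) \<circ> k"] by (rule trans)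
    thus ?thesis by (simp only: o_assoc)
  qed
  have P1: "(bframes \<mu> :: ('x \<Rightarrow> 'h) set) = {A \<circ> V \<circ> g | A V g. A \<in> GL_pos \<and> V \<in> unitary_group \<and> g \<in> Fb}"
  proof (rule set_eqI, rule iffI)
    fix f :: "'x \<Rightarrow> 'h" assume f: "f \<in> bframes \<mu>"
    have h: "frame_T \<mu> f \<in> bparseval_frames \<mu>" by (rule bframe_key(3)[OF f])
    show "f \<in> {A \<circ> V \<circ> g | A V g. A \<in> GL_pos \<and> V \<in> unitary_group \<and> g \<in> Fb}"
      using decomp[OF f] bframe_key(1)[OF f] tf(1,2)[OF h] by blast
  next
    fix f :: "'x \<Rightarrow> 'h" assume "f \<in> {A \<circ> V \<circ> g | A V g. A \<in> GL_pos \<and> V \<in> unitary_group \<and> g \<in> Fb}"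
    then obtain A V g where A: "A \<in> GL_pos" and V: "V \<in> unitary_group" and g: "g \<in> Fb" and fe: "f = A \<circ> V \<circ> g" by blast
    have "A \<circ> V \<in> GL" by (rule GL_comp[OF GLp_GL[OF A] unitary_GL[OF V]])
    from GL_comp_parseval(1)[OF this, of g \<mu>] g sub show "f \<in> bframes \<mu>" unfolding fe by blast
  qed
  have P2: "(bframes \<mu> :: ('x \<Rightarrow> 'h) set) = {A \<circ> g | A g. A \<in> GL \<and> g \<in> Fb}"
  proof (rule set_eqI, rule iffI)
    fix f :: "'x \<Rightarrow> 'h" assume f: "f \<in> bframes \<mu>"
    have h: "frame_T \<mu> f \<in> bparseval_frames \<mu>" by (rule bframe_key(3)[OF f])
    have "op_sqrt (frame_op \<mu> f) \<circ> U_tr Fb (frame_T \<mu> f) \<in> GL"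
      by (rule GL_comp[OF GLp_GL[OF bframe_key(1)[OF f]] unitary_GL[OF tf(2)[OF h]]])
    thus "f \<in> {A \<circ> g | A g. A \<in> GL \<and> g \<in> Fb}"
      using decomp[OF f] tf(1)[OF h] by blast
  next
    fix f :: "'x \<Rightarrow> 'h" assume "f \<in> {A \<circ> g | A g. A \<in> GL \<and> g \<in> Fb}"
    then obtain A g where A: "A \<in> GL" and g: "g \<in> Fb" and fe: "f = A \<circ> g" by blast
    from GL_comp_parseval(1)[OF A, of g \<mu>] g sub show "f \<in> bframes \<mu>" unfolding fe by blast
  qed
  have P3: "(bframes \<mu> :: ('x \<Rightarrow> 'h) set) = {A \<circ> g | A g. A \<in> GL_pos \<and> g \<in> bparseval_frames \<mu>}"
  proof (rule set_eqI, rule iffI)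
    fix f :: "'x \<Rightarrow> 'h" assume f: "f \<in> bframes \<mu>"
    show "f \<in> {A \<circ> g | A g. A \<in> GL_pos \<and> g \<in> bparseval_frames \<mu>}"
      using bframe_key(1,3,4)[OF f] by blast
  next
    fix f :: "'x \<Rightarrow> 'h" assume "f \<in> {A \<circ> g | A g. A \<in> GL_pos \<and> g \<in> bparseval_frames \<mu>}"
    then obtain A g where A: "A \<in> GL_pos" and g: "g \<in> bparseval_frames \<mu>" and fe: "f = A \<circ> g" by blast
    from GL_comp_parseval(1)[OF GLp_GL[OF A] g] show "f \<in> bframes \<mu>" unfolding fe .
  qed
  have P4: "\<forall>f \<in> (bframes \<mu> :: ('x \<Rightarrow> 'h) set).
            frame_T \<mu> f \<in> bparseval_frames \<mu>
          \<and> op_sqrt (frame_op \<mu> f) \<in> GL_pos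
          \<and> f = op_sqrt (frame_op \<mu> f) \<circ> U_tr Fb (frame_T \<mu> f) \<circ> sigma_tr Fb (frame_T \<mu> f)
          \<and> (\<forall>A V g. A \<in> GL_pos \<and> V \<in> unitary_group \<and> g \<in> Fb \<and> f = A \<circ> V \<circ> g \<longrightarrow>
               A = op_sqrt (frame_op \<mu> f) \<and> V = U_tr Fb (frame_T \<mu> f) \<and> g = sigma_tr Fb (frame_T \<mu> f))"
  proof (intro ballI conjI allI impI)
    fix f :: "'x \<Rightarrow> 'h" assume f: "f \<in> bframes \<mu>"
    show "frame_T \<mu> f \<in> bparseval_frames \<mu>" by (rule bframe_key(3)[OF f])
    show "op_sqrt (frame_op \<mu> f) \<in> GL_pos" by (rule bframe_key(1)[OF f])
    show "f = op_sqrt (frame_op \<mu> f) \<circ> U_tr Fb (frame_T \<mu> f) \<circ> sigma_tr Fb (frame_T \<mu> f)"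
      by (rule decomp[OF f])
    fix A V g assume asm: "A \<in> GL_pos \<and> V \<in> unitary_group \<and> g \<in> Fb \<and> f = A \<circ> V \<circ> g"
    hence A: "A \<in> GL_pos" and V: "V \<in> unitary_group" and g: "g \<in> Fb" and fe: "f = A \<circ> (V \<circ> g)"
      by (auto simp: o_assoc)
    have pA: "positive_op A" using A by (simp add: GL_pos_def)
    have AG: "A \<in> GL" using A by (simp add: GL_pos_def)
    have Vg: "V \<circ> g \<in> bparseval_frames \<mu>" using unitary_comp_parseval[OF V] g sub by blast
    have "frame_op \<mu> f = A \<circ> adj A" unfolding fe by (rule GL_comp_parseval(3)[OF AG Vg])
    hence fo: "frame_op \<mu> f = A \<circ> A" by (simp add: positive_adj[OF pA])
    have Aeq: "A = op_sqrt (frame_op \<mu> f)" by (rule bframe_key(2)[OF f pA fo[symmetric]])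
    have "frame_T \<mu> f = (\<lambda>x. inv A (f x))"
      unfolding frame_T_def op_inv_sqrt_def Aeq[symmetric] ..
    also have "\<dots> = V \<circ> g" unfolding fe using GL_D(4)[OF AG] by (simp add: comp_def)
    finally have Tf: "frame_T \<mu> f = V \<circ> g" .
    have "sigma_tr Fb (frame_T \<mu> f) = g \<and> U_tr Fb (frame_T \<mu> f) = V"
      using tf(4)[OF bframe_key(3)[OF f] V g Tf] .
    thus "A = op_sqrt (frame_op \<mu> f)" "V = U_tr Fb (frame_T \<mu> f)" "g = sigma_tr Fb (frame_T \<mu> f)"
      using Aeq by auto
  qed
  show ?thesis using P1 P2 P3 P4 by blast
qed

end
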